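(* Every morphism of bigroupoids $(F,\phi):\mathcal A\to\mathcal C$ factors as $(F,\phi)=(H,\eta)\circ(G,\gamma)$ with $(G,\gamma):\mathcal A\to\mathcal B$ a cofibration and $(H,\eta):\mathcal B\to\mathcal C$ a strict morphism (i.e. $\eta$ is the identity) which is a trivial fibration.
   Context: A bigroupoid $\mathcal B$ consists of: a set $\mathcal B_0$ of 0-cells; for each $A,B\in\mathcal B_0$ a groupoid $\mathcal B(A,B)$ whose objects are 1-cells and whose arrows are 2-cells; composition functors $*$; identity 1-cells $1_A$; inversion functors $(-)^*:\mathcal B(A,B)\to\mathcal B(B,A)$; and natural isomorphisms $\mathbf a:(h*g)*f\Rightarrow h*(g*f)$, $\mathbf l:1_B*f\Rightarrow f$, $\mathbf r:f*1_A\Rightarrow f$, $\mathbf e:f^**f\Rightarrow 1_A$, $\mathbf i:1_B\Rightarrow f*f^*$, such that the pentagon for $\mathbf a$ commutes, $(\mathrm{id}*\mathbf l)\circ\mathbf a=\mathbf r*\mathrm{id}$, and $\mathbf r_f\circ(\mathrm{id}*\mathbf e_f)\circ\mathbf a\circ(\mathbf i_f*\mathrm{id})=\mathbf l_f$. A morphism $(F,\phi):\mathcal A\to\mathcal B$ consists of a function on 0-cells, functors $F_{A,A'}:\mathcal A(A,A')\to\mathcal B(FA,FA')$ and natural isomorphisms $\phi_{g,f}:Fg*Ff\Rightarrow F(g*f)$, $\phi_A:1_{FA}\Rightarrow F1_A$, $\phi_f:(Ff)^*\Rightarrow F(f^* )$ satisfying $F\mathbf a\circ\phi\circ(\phi*\mathrm{id})=\phi\circ(\mathrm{id}*\phi)\circ\mathbf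 a$, $F\mathbf r\circ\phi\circ(\mathrm{id}*\phi_A)=\mathbf r$, $F\mathbf l\circ\phi\circ(\phi_B*\mathrm{id})=\mathbf l$, $F\mathbf e\circ\phi\circ(\phi_f*\mathrm{id})=\phi_A\circ\mathbf e$, $F\mathbf i\circ\phi_B=\phi\circ(\mathrm{id}*\phi_f)\circ\mathbf i$; it is strict if all components of $\phi$ are identities; composition is $(G,\gamma)\circ(F,\phi)=(GF,G\phi\circ\gamma F)$. Fibration: (1) for every 0-cell $A'$ of $\mathcal A$ and 1-cell $b:B\to FA'$ there is $a:A\to A'$ with $FA=B$, $Fa=b$; (2) for every 1-cell $a'$ and 2-cell $\beta:b\Rightarrow Fa'$ there is $\alpha:a\Rightarrow a'$ with $Fa=b$, $F\alpha=\beta$. Cofibration: injective on 0-cells and each $F_{A,A'}$ injective on objects. Weak equivalence: every 0-cell $B$ of $\mathcal B$ admits a 1-cell $B\to FA'$ for some 0-cell $A'$, and each $F_{A,A'}$ is an equivalence of categories. A trivial fibration is a fibration that is a weak equivalence. *)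

theory Defs
  imports Main
begin

text \<open>A bigroupoid is encoded by its sets of 0-cells, 1-cells and 2-cells together with
source/target maps (so that the hom-groupoids B(X,Y) are disjoint) and total operation
functions, whose values only matter on composable arguments.\<close>

record ('o,'m,'t) bigrpd =
  obj :: "'o set"
  ar1 :: "'m set"
  ar2 :: "'t set"
  s1 :: "'m \<Rightarrow> 'o"
  t1 :: "'m \<Rightarrow> 'o"
  s2 :: "'t \<Rightarrow> 'm"
  t2 :: "'t \<Rightarrow> 'm"
  vc :: "'t \<Rightarrow> 't \<Rightarrow> 't"
  vi :: "'m \<Rightarrow> 't"
  hc1 :: "'m \<Rightarrow> 'm \<Rightarrow> 'm"
  hc2 :: "'t \<Rightarrow> 't \<Rightarrow> 't"
  idc :: "'o \<Rightarrow> 'm"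
  inv1 :: "'m \<Rightarrow> 'm"
  inv2 :: "'t \<Rightarrow> 't"
  assoc :: "'m \<Rightarrow> 'm \<Rightarrow> 'm \<Rightarrow> 't"
  lunit :: "'m \<Rightarrow> 't"
  runit :: "'m \<Rightarrow> 't"
  evc :: "'m \<Rightarrow> 't"
  coevc :: "'m \<Rightarrow> 't"

definition hom :: "('o,'m,'t) bigrpd \<Rightarrow> 'o \<Rightarrow> 'o \<Rightarrow> 'm set" where
  "hom B X Y = {f \<in> ar1 B. s1 B f = X \<and> t1 B f = Y}"

definition cell :: "('o,'m,'t) bigrpd \<Rightarrow> 'm \<Rightarrow> 'm \<Rightarrow> 't set" where
  "cell B f g = {\<alpha> \<in> ar2 B. s2 B \<alpha> = f \<and> t2 B \<alpha> = g}"

definition bigroupoid :: "('o,'m,'t) bigrpd \<Rightarrow> bool" where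
  "bigroupoid B \<longleftrightarrow>
    \<comment> \<open>typing of cells\<close>
    (\<forall>f\<in>ar1 B. s1 B f \<in> obj B \<and> t1 B f \<in> obj B) \<and>
    (\<forall>\<alpha>\<in>ar2 B. s2 B \<alpha> \<in> ar1 B \<and> t2 B \<alpha> \<in> ar1 B \<and>
        s1 B (s2 B \<alpha>) = s1 B (t2 B \<alpha>) \<and> t1 B (s2 B \<alpha>) = t1 B (t2 B \<alpha>)) \<and>
    \<comment> \<open>each B(X,Y) is a groupoid\<close>
    (\<forall>f\<in>ar1 B. vi B f \<in> cell B f f) \<and>
    (\<forall>\<alpha>\<in>ar2 B. \<forall>\<beta>\<in>ar2 B. t2 B \<alpha> = s2 B \<beta> \<longrightarrow>
        vc B \<beta> \<alpha> \<in> cell B (s2 B \<alpha>) (t2 B \<beta>)) \<and>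
    (\<forall>\<alpha>\<in>ar2 B. \<forall>\<beta>\<in>ar2 B. \<forall>\<gamma>\<in>ar2 B. t2 B \<alpha> = s2 B \<beta> \<longrightarrow> t2 B \<beta> = s2 B \<gamma> \<longrightarrow>
        vc B \<gamma> (vc B \<beta> \<alpha>) = vc B (vc B \<gamma> \<beta>) \<alpha>) \<and>
    (\<forall>\<alpha>\<in>ar2 B. vc B (vi B (t2 B \<alpha>)) \<alpha> = \<alpha> \<and> vc B \<alpha> (vi B (s2 B \<alpha>)) = \<alpha>) \<and>
    (\<forall>\<alpha>\<in>ar2 B. \<exists>\<beta>\<in>cell B (t2 B \<alpha>) (s2 B \<alpha>).
        vc B \<beta> \<alpha> = vi B (s2 B \<alpha>) \<and> vc B \<alpha> \<beta> = vi B (t2 B \<alpha>)) \<and>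
    \<comment> \<open>composition functors\<close>
    (\<forall>f\<in>ar1 B. \<forall>g\<in>ar1 B. t1 B f = s1 B g \<longrightarrow> hc1 B g f \<in> hom B (s1 B f) (t1 B g)) \<and>
    (\<forall>\<alpha>\<in>ar2 B. \<forall>\<beta>\<in>ar2 B. t1 B (s2 B \<alpha>) = s1 B (s2 B \<beta>) \<longrightarrow>
        hc2 B \<beta> \<alpha> \<in> cell B (hc1 B (s2 B \<beta>) (s2 B \<alpha>)) (hc1 B (t2 B \<beta>) (t2 B \<alpha>))) \<and>
    (\<forall>f\<in>ar1 B. \<forall>g\<in>ar1 B. t1 B f = s1 B g \<longrightarrow> hc2 B (vi B g) (vi B f) = vi B (hc1 B g f)) \<and>
    (\<forall>\<alpha>\<in>ar2 B. \<forall>\<alpha>'\<in>ar2 B. \<forall>\<beta>\<in>ar2 B. \<forall>\<beta>'\<in>ar2 B.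
        t2 B \<alpha> = s2 B \<alpha>' \<longrightarrow> t2 B \<beta> = s2 B \<beta>' \<longrightarrow> t1 B (s2 B \<alpha>) = s1 B (s2 B \<beta>) \<longrightarrow>
        hc2 B (vc B \<beta>' \<beta>) (vc B \<alpha>' \<alpha>) = vc B (hc2 B \<beta>' \<alpha>') (hc2 B \<beta> \<alpha>)) \<and>
    \<comment> \<open>identity 1-cells\<close>
    (\<forall>X\<in>obj B. idc B X \<in> hom B X X) \<and>
    \<comment> \<open>inversion functors B(X,Y) -> B(Y,X)\<close>
    (\<forall>f\<in>ar1 B. inv1 B f \<in> hom B (t1 B f) (s1 B f)) \<and>
    (\<forall>\<alpha>\<in>ar2 B. inv2 B \<alpha> \<in> cell B (inv1 B (s2 B \<alpha>)) (inv1 B (t2 B \<alpha>))) \<and>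
    (\<forall>f\<in>ar1 B. inv2 B (vi B f) = vi B (inv1 B f)) \<and>
    (\<forall>\<alpha>\<in>ar2 B. \<forall>\<beta>\<in>ar2 B. t2 B \<alpha> = s2 B \<beta> \<longrightarrow>
        inv2 B (vc B \<beta> \<alpha>) = vc B (inv2 B \<beta>) (inv2 B \<alpha>)) \<and>
    \<comment> \<open>associator a and its naturality\<close>
    (\<forall>f\<in>ar1 B. \<forall>g\<in>ar1 B. \<forall>h\<in>ar1 B. t1 B f = s1 B g \<longrightarrow> t1 B g = s1 B h \<longrightarrow>
        assoc B h g f \<in> cell B (hc1 B (hc1 B h g) f) (hc1 B h (hc1 B g f))) \<and>
    (\<forall>\<alpha>\<in>ar2 B. \<forall>\<beta>\<in>ar2 B. \<forall>\<gamma>\<in>ar2 B.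
        t1 B (s2 B \<alpha>) = s1 B (s2 B \<beta>) \<longrightarrow> t1 B (s2 B \<beta>) = s1 B (s2 B \<gamma>) \<longrightarrow>
        vc B (assoc B (t2 B \<gamma>) (t2 B \<beta>) (t2 B \<alpha>)) (hc2 B (hc2 B \<gamma> \<beta>) \<alpha>)
          = vc B (hc2 B \<gamma> (hc2 B \<beta> \<alpha>)) (assoc B (s2 B \<gamma>) (s2 B \<beta>) (s2 B \<alpha>))) \<and>
    \<comment> \<open>left unitor l\<close>
    (\<forall>f\<in>ar1 B. lunit B f \<in> cell B (hc1 B (idc B (t1 B f)) f) f) \<and>
    (\<forall>\<alpha>\<in>ar2 B. vc B \<alpha> (lunit B (s2 B \<alpha>))
        = vc B (lunit B (t2 B \<alpha>)) (hc2 B (vi B (idc B (t1 B (s2 B \<alpha>)))) \<alpha>)) \<and>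
    \<comment> \<open>right unitor r\<close>
    (\<forall>f\<in>ar1 B. runit B f \<in> cell B (hc1 B f (idc B (s1 B f))) f) \<and>
    (\<forall>\<alpha>\<in>ar2 B. vc B \<alpha> (runit B (s2 B \<alpha>))
        = vc B (runit B (t2 B \<alpha>)) (hc2 B \<alpha> (vi B (idc B (s1 B (s2 B \<alpha>)))))) \<and>
    \<comment> \<open>e : f^* * f => 1_A\<close>
    (\<forall>f\<in>ar1 B. evc B f \<in> cell B (hc1 B (inv1 B f) f) (idc B (s1 B f))) \<and>
    (\<forall>\<alpha>\<in>ar2 B. vc B (vi B (idc B (s1 B (s2 B \<alpha>)))) (evc B (s2 B \<alpha>))
        = vc B (evc B (t2 B \<alpha>)) (hc2 B (inv2 B \<alpha>) \<alpha>)) \<and>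
    \<comment> \<open>i : 1_B => f * f^*\<close>
    (\<forall>f\<in>ar1 B. coevc B f \<in> cell B (idc B (t1 B f)) (hc1 B f (inv1 B f))) \<and>
    (\<forall>\<alpha>\<in>ar2 B. vc B (hc2 B \<alpha> (inv2 B \<alpha>)) (coevc B (s2 B \<alpha>))
        = vc B (coevc B (t2 B \<alpha>)) (vi B (idc B (t1 B (s2 B \<alpha>))))) \<and>
    \<comment> \<open>pentagon\<close>
    (\<forall>f\<in>ar1 B. \<forall>g\<in>ar1 B. \<forall>h\<in>ar1 B. \<forall>k\<in>ar1 B.
        t1 B f = s1 B g \<longrightarrow> t1 B g = s1 B h \<longrightarrow> t1 B h = s1 B k \<longrightarrow>
        vc B (assoc B k h (hc1 B g f)) (assoc B (hc1 B k h) g f)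
          = vc B (hc2 B (vi B k) (assoc B h g f))
              (vc B (assoc B k (hc1 B h g) f) (hc2 B (assoc B k h g) (vi B f)))) \<and>
    \<comment> \<open>(id * l) o a = r * id\<close>
    (\<forall>f\<in>ar1 B. \<forall>g\<in>ar1 B. t1 B f = s1 B g \<longrightarrow>
        vc B (hc2 B (vi B g) (lunit B f)) (assoc B g (idc B (t1 B f)) f)
          = hc2 B (runit B g) (vi B f)) \<and>
    \<comment> \<open>r o (id * e) o a o (i * id) = l\<close>
    (\<forall>f\<in>ar1 B.
        vc B (runit B f) (vc B (hc2 B (vi B f) (evc B f))
          (vc B (assoc B f (inv1 B f) f) (hc2 B (coevc B f) (vi B f))))
          = lunit B f)"

record ('ao,'am,'at,'bo,'bm,'bt) bmor =
  F0 :: "'ao \<Rightarrow> 'bo"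
  F1 :: "'am \<Rightarrow> 'bm"
  F2 :: "'at \<Rightarrow> 'bt"
  phc :: "'am \<Rightarrow> 'am \<Rightarrow> 'bt"
  phu :: "'ao \<Rightarrow> 'bt"
  phi :: "'am \<Rightarrow> 'bt"

definition morphism ::
  "('ao,'am,'at) bigrpd \<Rightarrow> ('bo,'bm,'bt) bigrpd \<Rightarrow> ('ao,'am,'at,'bo,'bm,'bt) bmor \<Rightarrow> bool" where
  "morphism A B M \<longleftrightarrow>
    (\<forall>X\<in>obj A. F0 M X \<in> obj B) \<and>
    (\<forall>f\<in>ar1 A. F1 M f \<in> hom B (F0 M (s1 A f)) (F0 M (t1 A f))) \<and>
    (\<forall>\<alpha>\<in>ar2 A. F2 M \<alpha> \<in> cell B (F1 M (s2 A \<alpha>)) (F1 M (t2 A \<alpha>))) \<and>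
    (\<forall>f\<in>ar1 A. F2 M (vi A f) = vi B (F1 M f)) \<and>
    (\<forall>\<alpha>\<in>ar2 A. \<forall>\<beta>\<in>ar2 A. t2 A \<alpha> = s2 A \<beta> \<longrightarrow>
        F2 M (vc A \<beta> \<alpha>) = vc B (F2 M \<beta>) (F2 M \<alpha>)) \<and>
    \<comment> \<open>phi_{g,f} and naturality\<close>
    (\<forall>f\<in>ar1 A. \<forall>g\<in>ar1 A. t1 A f = s1 A g \<longrightarrow>
        phc M g f \<in> cell B (hc1 B (F1 M g) (F1 M f)) (F1 M (hc1 A g f))) \<and>
    (\<forall>\<alpha>\<in>ar2 A. \<forall>\<beta>\<in>ar2 A. t1 A (s2 A \<alpha>) = s1 A (s2 A \<beta>) \<longrightarrow>
        vc B (F2 M (hc2 A \<beta> \<alpha>)) (phc M (s2 A \<beta>) (s2 A \<alpha>))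
          = vc B (phc M (t2 A \<beta>) (t2 A \<alpha>)) (hc2 B (F2 M \<beta>) (F2 M \<alpha>))) \<and>
    \<comment> \<open>phi_A\<close>
    (\<forall>X\<in>obj A. phu M X \<in> cell B (idc B (F0 M X)) (F1 M (idc A X))) \<and>
    \<comment> \<open>phi_f and naturality\<close>
    (\<forall>f\<in>ar1 A. phi M f \<in> cell B (inv1 B (F1 M f)) (F1 M (inv1 A f))) \<and>
    (\<forall>\<alpha>\<in>ar2 A. vc B (F2 M (inv2 A \<alpha>)) (phi M (s2 A \<alpha>))
        = vc B (phi M (t2 A \<alpha>)) (inv2 B (F2 M \<alpha>))) \<and>
    \<comment> \<open>F a o phi o (phi * id) = phi o (id * phi) o a\<close>
    (\<forall>f\<in>ar1 A. \<forall>g\<in>ar1 A. \<forall>h\<in>ar1 A. t1 A f = s1 A g \<longrightarrow> t1 A g = s1 A h \<longrightarrow>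
        vc B (F2 M (assoc A h g f))
          (vc B (phc M (hc1 A h g) f) (hc2 B (phc M h g) (vi B (F1 M f))))
        = vc B (phc M h (hc1 A g f))
          (vc B (hc2 B (vi B (F1 M h)) (phc M g f)) (assoc B (F1 M h) (F1 M g) (F1 M f)))) \<and>
    \<comment> \<open>F r o phi o (id * phi_A) = r\<close>
    (\<forall>f\<in>ar1 A.
        vc B (F2 M (runit A f))
          (vc B (phc M f (idc A (s1 A f))) (hc2 B (vi B (F1 M f)) (phu M (s1 A f))))
        = runit B (F1 M f)) \<and>
    \<comment> \<open>F l o phi o (phi_B * id) = l\<close>
    (\<forall>f\<in>ar1 A.
        vc B (F2 M (lunit A f))
          (vc B (phc M (idc A (t1 A f)) f) (hc2 B (phu M (t1 A f)) (vi B (F1 M f))))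
        = lunit B (F1 M f)) \<and>
    \<comment> \<open>F e o phi o (phi_f * id) = phi_A o e\<close>
    (\<forall>f\<in>ar1 A.
        vc B (F2 M (evc A f))
          (vc B (phc M (inv1 A f) f) (hc2 B (phi M f) (vi B (F1 M f))))
        = vc B (phu M (s1 A f)) (evc B (F1 M f))) \<and>
    \<comment> \<open>F i o phi_B = phi o (id * phi_f) o i\<close>
    (\<forall>f\<in>ar1 A.
        vc B (F2 M (coevc A f)) (phu M (t1 A f))
        = vc B (phc M f (inv1 A f))
            (vc B (hc2 B (vi B (F1 M f)) (phi M f)) (coevc B (F1 M f))))"

definition strict_mor ::
  "('ao,'am,'at) bigrpd \<Rightarrow> ('bo,'bm,'bt) bigrpd \<Rightarrow> ('ao,'am,'at,'bo,'bm,'bt) bmor \<Rightarrow> bool" where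
  "strict_mor A B M \<longleftrightarrow>
    (\<forall>f\<in>ar1 A. \<forall>g\<in>ar1 A. t1 A f = s1 A g \<longrightarrow> phc M g f = vi B (hc1 B (F1 M g) (F1 M f))) \<and>
    (\<forall>X\<in>obj A. phu M X = vi B (idc B (F0 M X))) \<and>
    (\<forall>f\<in>ar1 A. phi M f = vi B (inv1 B (F1 M f)))"

definition mcomp ::
  "('co,'cm,'ct) bigrpd \<Rightarrow> ('bo,'bm,'bt,'co,'cm,'ct) bmor \<Rightarrow> ('ao,'am,'at,'bo,'bm,'bt) bmor
     \<Rightarrow> ('ao,'am,'at,'co,'cm,'ct) bmor" where
  "mcomp C N M =
    \<lparr> F0 = F0 N \<circ> F0 M, F1 = F1 N \<circ> F1 M, F2 = F2 N \<circ> F2 M,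
      phc = (\<lambda>g f. vc C (F2 N (phc M g f)) (phc N (F1 M g) (F1 M f))),
      phu = (\<lambda>X. vc C (F2 N (phu M X)) (phu N (F0 M X))),
      phi = (\<lambda>f. vc C (F2 N (phi M f)) (phi N (F1 M f))) \<rparr>"

text \<open>Equality of morphisms out of A: all data agree on the cells of A
 (values of the total HOL functions outside the carriers are irrelevant).\<close>
definition mor_eq ::
  "('ao,'am,'at) bigrpd \<Rightarrow> ('ao,'am,'at,'bo,'bm,'bt) bmor \<Rightarrow> ('ao,'am,'at,'bo,'bm,'bt) bmor \<Rightarrow> bool" where
  "mor_eq A M N \<longleftrightarrow>
    (\<forall>X\<in>obj A. F0 M X = F0 N X) \<and>
    (\<forall>f\<in>ar1 A. F1 M f = F1 N f) \<and>
    (\<forall>\<alpha>\<in>ar2 A. F2 M \<alpha> = F2 N \<alpha>) \<and>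
    (\<forall>f\<in>ar1 A. \<forall>g\<in>ar1 A. t1 A f = s1 A g \<longrightarrow> phc M g f = phc N g f) \<and>
    (\<forall>X\<in>obj A. phu M X = phu N X) \<and>
    (\<forall>f\<in>ar1 A. phi M f = phi N f)"

definition fibration ::
  "('ao,'am,'at) bigrpd \<Rightarrow> ('bo,'bm,'bt) bigrpd \<Rightarrow> ('ao,'am,'at,'bo,'bm,'bt) bmor \<Rightarrow> bool" where
  "fibration A B M \<longleftrightarrow>
    (\<forall>X'\<in>obj A. \<forall>b\<in>ar1 B. t1 B b = F0 M X' \<longrightarrow>
        (\<exists>a\<in>ar1 A. t1 A a = X' \<and> F0 M (s1 A a) = s1 B b \<and> F1 M a = b)) \<and>
    (\<forall>a'\<in>ar1 A. \<forall>\<beta>\<in>ar2 B. t2 B \<beta> = F1 M a' \<longrightarrow>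
        (\<exists>\<alpha>\<in>ar2 A. t2 A \<alpha> = a' \<and> F1 M (s2 A \<alpha>) = s2 B \<beta> \<and> F2 M \<alpha> = \<beta>))"

definition cofibration ::
  "('ao,'am,'at) bigrpd \<Rightarrow> ('bo,'bm,'bt) bigrpd \<Rightarrow> ('ao,'am,'at,'bo,'bm,'bt) bmor \<Rightarrow> bool" where
  "cofibration A B M \<longleftrightarrow>
    inj_on (F0 M) (obj A) \<and>
    (\<forall>X\<in>obj A. \<forall>Y\<in>obj A. inj_on (F1 M) (hom A X Y))"

text \<open>The functor F_{X,Y} : A(X,Y) -> B(FX,FY) is an equivalence of categories:
 there is a functor K back and natural isomorphisms 1 => KF and FK => 1
 (naturality given; invertibility is automatic in groupoids).\<close>
definition hom_equivalence ::
  "('ao,'am,'at) bigrpd \<Rightarrow> ('bo,'bm,'bt) bigrpd \<Rightarrow> ('ao,'am,'at,'bo,'bm,'bt) bmor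
     \<Rightarrow> 'ao \<Rightarrow> 'ao \<Rightarrow> bool" where
  "hom_equivalence A B M X Y \<longleftrightarrow>
    (\<exists>(K1 :: 'bm \<Rightarrow> 'am) (K2 :: 'bt \<Rightarrow> 'at) (\<eta> :: 'am \<Rightarrow> 'at) (\<epsilon> :: 'bm \<Rightarrow> 'bt).
      (\<forall>h\<in>hom B (F0 M X) (F0 M Y). K1 h \<in> hom A X Y) \<and>
      (\<forall>\<beta>\<in>ar2 B. s2 B \<beta> \<in> hom B (F0 M X) (F0 M Y) \<longrightarrow>
          K2 \<beta> \<in> cell A (K1 (s2 B \<beta>)) (K1 (t2 B \<beta>))) \<and>
      (\<forall>h\<in>hom B (F0 M X) (F0 M Y). K2 (vi B h) = vi A (K1 h)) \<and>
      (\<forall>\<beta>\<in>ar2 B. \<forall>\<beta>'\<in>ar2 B. s2 B \<beta> \<in> hom B (F0 M X) (F0 M Y) \<longrightarrow> t2 B \<beta> = s2 B \<beta>' \<longrightarrow>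
          K2 (vc B \<beta>' \<beta>) = vc A (K2 \<beta>') (K2 \<beta>)) \<and>
      (\<forall>f\<in>hom A X Y. \<eta> f \<in> cell A f (K1 (F1 M f))) \<and>
      (\<forall>\<alpha>\<in>ar2 A. s2 A \<alpha> \<in> hom A X Y \<longrightarrow>
          vc A (K2 (F2 M \<alpha>)) (\<eta> (s2 A \<alpha>)) = vc A (\<eta> (t2 A \<alpha>)) \<alpha>) \<and>
      (\<forall>h\<in>hom B (F0 M X) (F0 M Y). \<epsilon> h \<in> cell B (F1 M (K1 h)) h) \<and>
      (\<forall>\<beta>\<in>ar2 B. s2 B \<beta> \<in> hom B (F0 M X) (F0 M Y) \<longrightarrow>
          vc B \<beta> (\<epsilon> (s2 B \<beta>)) = vc B (\<epsilon> (t2 B \<beta>)) (F2 M (K2 \<beta>))))"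

definition weak_equivalence ::
  "('ao,'am,'at) bigrpd \<Rightarrow> ('bo,'bm,'bt) bigrpd \<Rightarrow> ('ao,'am,'at,'bo,'bm,'bt) bmor \<Rightarrow> bool" where
  "weak_equivalence A B M \<longleftrightarrow>
    (\<forall>Z\<in>obj B. \<exists>X'\<in>obj A. hom B Z (F0 M X') \<noteq> {}) \<and>
    (\<forall>X\<in>obj A. \<forall>Y\<in>obj A. hom_equivalence A B M X Y)"

definition trivial_fibration ::
  "('ao,'am,'at) bigrpd \<Rightarrow> ('bo,'bm,'bt) bigrpd \<Rightarrow> ('ao,'am,'at,'bo,'bm,'bt) bmor \<Rightarrow> bool" where
  "trivial_fibration A B M \<longleftrightarrow> fibration A B M \<and> weak_equivalence A B M"

text \<open>HOL cannot quantify over types, so the middle bigroupoid of the factorization must live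
in a fixed type built from the types of A and C. We use formal words of 1-cells
(generators with specified endpoints, identities, composites, inverses).\<close>

datatype ('o,'g) cterm =
    CGen 'o 'g 'o | CId 'o | CComp "('o,'g) cterm" "('o,'g) cterm" | CInv "('o,'g) cterm"

type_synonym ('ao,'am,'at,'co,'cm,'ct) mid_bigrpd =
  "('ao + 'co, ('ao + 'co, 'am + 'cm) cterm,
     ('ao + 'co, 'am + 'cm) cterm \<times> ('at + 'ct) \<times> ('ao + 'co, 'am + 'cm) cterm) bigrpd"

end

theory Submission
  imports Defs
begin
lemma bigroupoidD:
  assumes "bigroupoid B"
  shows
    "(\<forall>f\<in>ar1 B. s1 B f \<in> obj B \<and> t1 B f \<in> obj B)"
    "(\<forall>\<alpha>\<in>ar2 B. s2 B \<alpha> \<in> ar1 B \<and> t2 B \<alpha> \<in> ar1 B \<and>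
        s1 B (s2 B \<alpha>) = s1 B (t2 B \<alpha>) \<and> t1 B (s2 B \<alpha>) = t1 B (t2 B \<alpha>))"
    "(\<forall>f\<in>ar1 B. vi B f \<in> cell B f f)"
    "(\<forall>\<alpha>\<in>ar2 B. \<forall>\<beta>\<in>ar2 B. t2 B \<alpha> = s2 B \<beta> \<longrightarrow>
        vc B \<beta> \<alpha> \<in> cell B (s2 B \<alpha>) (t2 B \<beta>))"
    "(\<forall>\<alpha>\<in>ar2 B. \<forall>\<beta>\<in>ar2 B. \<forall>\<gamma>\<in>ar2 B. t2 B \<alpha> = s2 B \<beta> \<longrightarrow> t2 B \<beta> = s2 B \<gamma> \<longrightarrow>
        vc B \<gamma> (vc B \<beta> \<alpha>) = vc B (vc B \<gamma> \<beta>) \<alpha>)"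
    "(\<forall>\<alpha>\<in>ar2 B. vc B (vi B (t2 B \<alpha>)) \<alpha> = \<alpha> \<and> vc B \<alpha> (vi B (s2 B \<alpha>)) = \<alpha>)"
    "(\<forall>\<alpha>\<in>ar2 B. \<exists>\<beta>\<in>cell B (t2 B \<alpha>) (s2 B \<alpha>).
        vc B \<beta> \<alpha> = vi B (s2 B \<alpha>) \<and> vc B \<alpha> \<beta> = vi B (t2 B \<alpha>))"
    "(\<forall>f\<in>ar1 B. \<forall>g\<in>ar1 B. t1 B f = s1 B g \<longrightarrow> hc1 B g f \<in> hom B (s1 B f) (t1 B g))"
    "(\<forall>\<alpha>\<in>ar2 B. \<forall>\<beta>\<in>ar2 B. t1 B (s2 B \<alpha>) = s1 B (s2 B \<beta>) \<longrightarrow>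
        hc2 B \<beta> \<alpha> \<in> cell B (hc1 B (s2 B \<beta>) (s2 B \<alpha>)) (hc1 B (t2 B \<beta>) (t2 B \<alpha>)))"
    "(\<forall>f\<in>ar1 B. \<forall>g\<in>ar1 B. t1 B f = s1 B g \<longrightarrow> hc2 B (vi B g) (vi B f) = vi B (hc1 B g f))"
    "(\<forall>\<alpha>\<in>ar2 B. \<forall>\<alpha>'\<in>ar2 B. \<forall>\<beta>\<in>ar2 B. \<forall>\<beta>'\<in>ar2 B.
        t2 B \<alpha> = s2 B \<alpha>' \<longrightarrow> t2 B \<beta> = s2 B \<beta>' \<longrightarrow> t1 B (s2 B \<alpha>) = s1 B (s2 B \<beta>) \<longrightarrow>
        hc2 B (vc B \<beta>' \<beta>) (vc B \<alpha>' \<alpha>) = vc B (hc2 B \<beta>' \<alpha>') (hc2 B \<beta> \<alpha>))"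
    "(\<forall>X\<in>obj B. idc B X \<in> hom B X X)"
    "(\<forall>f\<in>ar1 B. inv1 B f \<in> hom B (t1 B f) (s1 B f))"
    "(\<forall>\<alpha>\<in>ar2 B. inv2 B \<alpha> \<in> cell B (inv1 B (s2 B \<alpha>)) (inv1 B (t2 B \<alpha>)))"
    "(\<forall>f\<in>ar1 B. inv2 B (vi B f) = vi B (inv1 B f))"
    "(\<forall>\<alpha>\<in>ar2 B. \<forall>\<beta>\<in>ar2 B. t2 B \<alpha> = s2 B \<beta> \<longrightarrow>
        inv2 B (vc B \<beta> \<alpha>) = vc B (inv2 B \<beta>) (inv2 B \<alpha>))"
    "(\<forall>f\<in>ar1 B. \<forall>g\<in>ar1 B. \<forall>h\<in>ar1 B. t1 B f = s1 B g \<longrightarrow> t1 B g = s1 B h \<longrightarrow>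
        assoc B h g f \<in> cell B (hc1 B (hc1 B h g) f) (hc1 B h (hc1 B g f)))"
    "(\<forall>\<alpha>\<in>ar2 B. \<forall>\<beta>\<in>ar2 B. \<forall>\<gamma>\<in>ar2 B.
        t1 B (s2 B \<alpha>) = s1 B (s2 B \<beta>) \<longrightarrow> t1 B (s2 B \<beta>) = s1 B (s2 B \<gamma>) \<longrightarrow>
        vc B (assoc B (t2 B \<gamma>) (t2 B \<beta>) (t2 B \<alpha>)) (hc2 B (hc2 B \<gamma> \<beta>) \<alpha>)
          = vc B (hc2 B \<gamma> (hc2 B \<beta> \<alpha>)) (assoc B (s2 B \<gamma>) (s2 B \<beta>) (s2 B \<alpha>)))"
    "(\<forall>f\<in>ar1 B. lunit B f \<in> cell B (hc1 B (idc B (t1 B f)) f) f)"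
    "(\<forall>\<alpha>\<in>ar2 B. vc B \<alpha> (lunit B (s2 B \<alpha>))
        = vc B (lunit B (t2 B \<alpha>)) (hc2 B (vi B (idc B (t1 B (s2 B \<alpha>)))) \<alpha>))"
    "(\<forall>f\<in>ar1 B. runit B f \<in> cell B (hc1 B f (idc B (s1 B f))) f)"
    "(\<forall>\<alpha>\<in>ar2 B. vc B \<alpha> (runit B (s2 B \<alpha>))
        = vc B (runit B (t2 B \<alpha>)) (hc2 B \<alpha> (vi B (idc B (s1 B (s2 B \<alpha>))))))"
    "(\<forall>f\<in>ar1 B. evc B f \<in> cell B (hc1 B (inv1 B f) f) (idc B (s1 B f)))"
    "(\<forall>\<alpha>\<in>ar2 B. vc B (vi B (idc B (s1 B (s2 B \<alpha>)))) (evc B (s2 B \<alpha>))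
        = vc B (evc B (t2 B \<alpha>)) (hc2 B (inv2 B \<alpha>) \<alpha>))"
    "(\<forall>f\<in>ar1 B. coevc B f \<in> cell B (idc B (t1 B f)) (hc1 B f (inv1 B f)))"
    "(\<forall>\<alpha>\<in>ar2 B. vc B (hc2 B \<alpha> (inv2 B \<alpha>)) (coevc B (s2 B \<alpha>))
        = vc B (coevc B (t2 B \<alpha>)) (vi B (idc B (t1 B (s2 B \<alpha>)))))"
    "(\<forall>f\<in>ar1 B. \<forall>g\<in>ar1 B. \<forall>h\<in>ar1 B. \<forall>k\<in>ar1 B.
        t1 B f = s1 B g \<longrightarrow> t1 B g = s1 B h \<longrightarrow> t1 B h = s1 B k \<longrightarrow>
        vc B (assoc B k h (hc1 B g f)) (assoc B (hc1 B k h) g f)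
          = vc B (hc2 B (vi B k) (assoc B h g f))
              (vc B (assoc B k (hc1 B h g) f) (hc2 B (assoc B k h g) (vi B f))))"
    "(\<forall>f\<in>ar1 B. \<forall>g\<in>ar1 B. t1 B f = s1 B g \<longrightarrow>
        vc B (hc2 B (vi B g) (lunit B f)) (assoc B g (idc B (t1 B f)) f)
          = hc2 B (runit B g) (vi B f))"
    "(\<forall>f\<in>ar1 B.
        vc B (runit B f) (vc B (hc2 B (vi B f) (evc B f))
          (vc B (assoc B f (inv1 B f) f) (hc2 B (coevc B f) (vi B f))))
          = lunit B f)"
    apply (insert assms[unfolded bigroupoid_def])
  apply ((elim conjE, assumption)+)
  done

lemma bigroupoidI:
  assumes
    "(\<forall>f\<in>ar1 B. s1 B f \<in> obj B \<and> t1 B f \<in> obj B)"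
  and     "(\<forall>\<alpha>\<in>ar2 B. s2 B \<alpha> \<in> ar1 B \<and> t2 B \<alpha> \<in> ar1 B \<and>
        s1 B (s2 B \<alpha>) = s1 B (t2 B \<alpha>) \<and> t1 B (s2 B \<alpha>) = t1 B (t2 B \<alpha>))"
  and     "(\<forall>f\<in>ar1 B. vi B f \<in> cell B f f)"
  and     "(\<forall>\<alpha>\<in>ar2 B. \<forall>\<beta>\<in>ar2 B. t2 B \<alpha> = s2 B \<beta> \<longrightarrow>
        vc B \<beta> \<alpha> \<in> cell B (s2 B \<alpha>) (t2 B \<beta>))"
  and     "(\<forall>\<alpha>\<in>ar2 B. \<forall>\<beta>\<in>ar2 B. \<forall>\<gamma>\<in>ar2 B. t2 B \<alpha> = s2 B \<beta> \<longrightarrow> t2 B \<beta> = s2 B \<gamma> \<longrightarrow>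
        vc B \<gamma> (vc B \<beta> \<alpha>) = vc B (vc B \<gamma> \<beta>) \<alpha>)"
  and     "(\<forall>\<alpha>\<in>ar2 B. vc B (vi B (t2 B \<alpha>)) \<alpha> = \<alpha> \<and> vc B \<alpha> (vi B (s2 B \<alpha>)) = \<alpha>)"
  and     "(\<forall>\<alpha>\<in>ar2 B. \<exists>\<beta>\<in>cell B (t2 B \<alpha>) (s2 B \<alpha>).
        vc B \<beta> \<alpha> = vi B (s2 B \<alpha>) \<and> vc B \<alpha> \<beta> = vi B (t2 B \<alpha>))"
  and     "(\<forall>f\<in>ar1 B. \<forall>g\<in>ar1 B. t1 B f = s1 B g \<longrightarrow> hc1 B g f \<in> hom B (s1 B f) (t1 B g))"
  and     "(\<forall>\<alpha>\<in>ar2 B. \<forall>\<beta>\<in>ar2 B. t1 B (s2 B \<alpha>) = s1 B (s2 B \<beta>) \<longrightarrow>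
        hc2 B \<beta> \<alpha> \<in> cell B (hc1 B (s2 B \<beta>) (s2 B \<alpha>)) (hc1 B (t2 B \<beta>) (t2 B \<alpha>)))"
  and     "(\<forall>f\<in>ar1 B. \<forall>g\<in>ar1 B. t1 B f = s1 B g \<longrightarrow> hc2 B (vi B g) (vi B f) = vi B (hc1 B g f))"
  and     "(\<forall>\<alpha>\<in>ar2 B. \<forall>\<alpha>'\<in>ar2 B. \<forall>\<beta>\<in>ar2 B. \<forall>\<beta>'\<in>ar2 B.
        t2 B \<alpha> = s2 B \<alpha>' \<longrightarrow> t2 B \<beta> = s2 B \<beta>' \<longrightarrow> t1 B (s2 B \<alpha>) = s1 B (s2 B \<beta>) \<longrightarrow>
        hc2 B (vc B \<beta>' \<beta>) (vc B \<alpha>' \<alpha>) = vc B (hc2 B \<beta>' \<alpha>') (hc2 B \<beta> \<alpha>))"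
  and     "(\<forall>X\<in>obj B. idc B X \<in> hom B X X)"
  and     "(\<forall>f\<in>ar1 B. inv1 B f \<in> hom B (t1 B f) (s1 B f))"
  and     "(\<forall>\<alpha>\<in>ar2 B. inv2 B \<alpha> \<in> cell B (inv1 B (s2 B \<alpha>)) (inv1 B (t2 B \<alpha>)))"
  and     "(\<forall>f\<in>ar1 B. inv2 B (vi B f) = vi B (inv1 B f))"
  and     "(\<forall>\<alpha>\<in>ar2 B. \<forall>\<beta>\<in>ar2 B. t2 B \<alpha> = s2 B \<beta> \<longrightarrow>
        inv2 B (vc B \<beta> \<alpha>) = vc B (inv2 B \<beta>) (inv2 B \<alpha>))"
  and     "(\<forall>f\<in>ar1 B. \<forall>g\<in>ar1 B. \<forall>h\<in>ar1 B. t1 B f = s1 B g \<longrightarrow> t1 B g = s1 B h \<longrightarrow>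
        assoc B h g f \<in> cell B (hc1 B (hc1 B h g) f) (hc1 B h (hc1 B g f)))"
  and     "(\<forall>\<alpha>\<in>ar2 B. \<forall>\<beta>\<in>ar2 B. \<forall>\<gamma>\<in>ar2 B.
        t1 B (s2 B \<alpha>) = s1 B (s2 B \<beta>) \<longrightarrow> t1 B (s2 B \<beta>) = s1 B (s2 B \<gamma>) \<longrightarrow>
        vc B (assoc B (t2 B \<gamma>) (t2 B \<beta>) (t2 B \<alpha>)) (hc2 B (hc2 B \<gamma> \<beta>) \<alpha>)
          = vc B (hc2 B \<gamma> (hc2 B \<beta> \<alpha>)) (assoc B (s2 B \<gamma>) (s2 B \<beta>) (s2 B \<alpha>)))"
  and     "(\<forall>f\<in>ar1 B. lunit B f \<in> cell B (hc1 B (idc B (t1 B f)) f) f)"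
  and     "(\<forall>\<alpha>\<in>ar2 B. vc B \<alpha> (lunit B (s2 B \<alpha>))
        = vc B (lunit B (t2 B \<alpha>)) (hc2 B (vi B (idc B (t1 B (s2 B \<alpha>)))) \<alpha>))"
  and     "(\<forall>f\<in>ar1 B. runit B f \<in> cell B (hc1 B f (idc B (s1 B f))) f)"
  and     "(\<forall>\<alpha>\<in>ar2 B. vc B \<alpha> (runit B (s2 B \<alpha>))
        = vc B (runit B (t2 B \<alpha>)) (hc2 B \<alpha> (vi B (idc B (s1 B (s2 B \<alpha>))))))"
  and     "(\<forall>f\<in>ar1 B. evc B f \<in> cell B (hc1 B (inv1 B f) f) (idc B (s1 B f)))"
  and     "(\<forall>\<alpha>\<in>ar2 B. vc B (vi B (idc B (s1 B (s2 B \<alpha>)))) (evc B (s2 B \<alpha>))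
        = vc B (evc B (t2 B \<alpha>)) (hc2 B (inv2 B \<alpha>) \<alpha>))"
  and     "(\<forall>f\<in>ar1 B. coevc B f \<in> cell B (idc B (t1 B f)) (hc1 B f (inv1 B f)))"
  and     "(\<forall>\<alpha>\<in>ar2 B. vc B (hc2 B \<alpha> (inv2 B \<alpha>)) (coevc B (s2 B \<alpha>))
        = vc B (coevc B (t2 B \<alpha>)) (vi B (idc B (t1 B (s2 B \<alpha>)))))"
  and     "(\<forall>f\<in>ar1 B. \<forall>g\<in>ar1 B. \<forall>h\<in>ar1 B. \<forall>k\<in>ar1 B.
        t1 B f = s1 B g \<longrightarrow> t1 B g = s1 B h \<longrightarrow> t1 B h = s1 B k \<longrightarrow>
        vc B (assoc B k h (hc1 B g f)) (assoc B (hc1 B k h) g f)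
          = vc B (hc2 B (vi B k) (assoc B h g f))
              (vc B (assoc B k (hc1 B h g) f) (hc2 B (assoc B k h g) (vi B f))))"
  and     "(\<forall>f\<in>ar1 B. \<forall>g\<in>ar1 B. t1 B f = s1 B g \<longrightarrow>
        vc B (hc2 B (vi B g) (lunit B f)) (assoc B g (idc B (t1 B f)) f)
          = hc2 B (runit B g) (vi B f))"
  and     "(\<forall>f\<in>ar1 B.
        vc B (runit B f) (vc B (hc2 B (vi B f) (evc B f))
          (vc B (assoc B f (inv1 B f) f) (hc2 B (coevc B f) (vi B f))))
          = lunit B f)"
  shows "bigroupoid B"
  using assms unfolding bigroupoid_def by blast

lemma morphismD:
  assumes "morphism A B M"
  shows
    "(\<forall>X\<in>obj A. F0 M X \<in> obj B)"
    "(\<forall>f\<in>ar1 A. F1 M f \<in> hom B (F0 M (s1 A f)) (F0 M (t1 A f)))"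
    "(\<forall>\<alpha>\<in>ar2 A. F2 M \<alpha> \<in> cell B (F1 M (s2 A \<alpha>)) (F1 M (t2 A \<alpha>)))"
    "(\<forall>f\<in>ar1 A. F2 M (vi A f) = vi B (F1 M f))"
    "(\<forall>\<alpha>\<in>ar2 A. \<forall>\<beta>\<in>ar2 A. t2 A \<alpha> = s2 A \<beta> \<longrightarrow>
        F2 M (vc A \<beta> \<alpha>) = vc B (F2 M \<beta>) (F2 M \<alpha>))"
    "(\<forall>f\<in>ar1 A. \<forall>g\<in>ar1 A. t1 A f = s1 A g \<longrightarrow>
        phc M g f \<in> cell B (hc1 B (F1 M g) (F1 M f)) (F1 M (hc1 A g f)))"
    "(\<forall>\<alpha>\<in>ar2 A. \<forall>\<beta>\<in>ar2 A. t1 A (s2 A \<alpha>) = s1 A (s2 A \<beta>) \<longrightarrow>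
        vc B (F2 M (hc2 A \<beta> \<alpha>)) (phc M (s2 A \<beta>) (s2 A \<alpha>))
          = vc B (phc M (t2 A \<beta>) (t2 A \<alpha>)) (hc2 B (F2 M \<beta>) (F2 M \<alpha>)))"
    "(\<forall>X\<in>obj A. phu M X \<in> cell B (idc B (F0 M X)) (F1 M (idc A X)))"
    "(\<forall>f\<in>ar1 A. phi M f \<in> cell B (inv1 B (F1 M f)) (F1 M (inv1 A f)))"
    "(\<forall>\<alpha>\<in>ar2 A. vc B (F2 M (inv2 A \<alpha>)) (phi M (s2 A \<alpha>))
        = vc B (phi M (t2 A \<alpha>)) (inv2 B (F2 M \<alpha>)))"
    "(\<forall>f\<in>ar1 A. \<forall>g\<in>ar1 A. \<forall>h\<in>ar1 A. t1 A f = s1 A g \<longrightarrow> t1 A g = s1 A h \<longrightarrow>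
        vc B (F2 M (assoc A h g f))
          (vc B (phc M (hc1 A h g) f) (hc2 B (phc M h g) (vi B (F1 M f))))
        = vc B (phc M h (hc1 A g f))
          (vc B (hc2 B (vi B (F1 M h)) (phc M g f)) (assoc B (F1 M h) (F1 M g) (F1 M f))))"
    "(\<forall>f\<in>ar1 A.
        vc B (F2 M (runit A f))
          (vc B (phc M f (idc A (s1 A f))) (hc2 B (vi B (F1 M f)) (phu M (s1 A f))))
        = runit B (F1 M f))"
    "(\<forall>f\<in>ar1 A.
        vc B (F2 M (lunit A f))
          (vc B (phc M (idc A (t1 A f)) f) (hc2 B (phu M (t1 A f)) (vi B (F1 M f))))
        = lunit B (F1 M f))"
    "(\<forall>f\<in>ar1 A.
        vc B (F2 M (evc A f))
          (vc B (phc M (inv1 A f) f) (hc2 B (phi M f) (vi B (F1 M f))))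
        = vc B (phu M (s1 A f)) (evc B (F1 M f)))"
    "(\<forall>f\<in>ar1 A.
        vc B (F2 M (coevc A f)) (phu M (t1 A f))
        = vc B (phc M f (inv1 A f))
            (vc B (hc2 B (vi B (F1 M f)) (phi M f)) (coevc B (F1 M f))))"
    apply (insert assms[unfolded morphism_def])
  apply ((elim conjE, assumption)+)
  done

lemma morphismI:
  assumes
    "(\<forall>X\<in>obj A. F0 M X \<in> obj B)"
  and     "(\<forall>f\<in>ar1 A. F1 M f \<in> hom B (F0 M (s1 A f)) (F0 M (t1 A f)))"
  and     "(\<forall>\<alpha>\<in>ar2 A. F2 M \<alpha> \<in> cell B (F1 M (s2 A \<alpha>)) (F1 M (t2 A \<alpha>)))"
  and     "(\<forall>f\<in>ar1 A. F2 M (vi A f) = vi B (F1 M f))"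
  and     "(\<forall>\<alpha>\<in>ar2 A. \<forall>\<beta>\<in>ar2 A. t2 A \<alpha> = s2 A \<beta> \<longrightarrow>
        F2 M (vc A \<beta> \<alpha>) = vc B (F2 M \<beta>) (F2 M \<alpha>))"
  and     "(\<forall>f\<in>ar1 A. \<forall>g\<in>ar1 A. t1 A f = s1 A g \<longrightarrow>
        phc M g f \<in> cell B (hc1 B (F1 M g) (F1 M f)) (F1 M (hc1 A g f)))"
  and     "(\<forall>\<alpha>\<in>ar2 A. \<forall>\<beta>\<in>ar2 A. t1 A (s2 A \<alpha>) = s1 A (s2 A \<beta>) \<longrightarrow>
        vc B (F2 M (hc2 A \<beta> \<alpha>)) (phc M (s2 A \<beta>) (s2 A \<alpha>))
          = vc B (phc M (t2 A \<beta>) (t2 A \<alpha>)) (hc2 B (F2 M \<beta>) (F2 M \<alpha>)))"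
  and     "(\<forall>X\<in>obj A. phu M X \<in> cell B (idc B (F0 M X)) (F1 M (idc A X)))"
  and     "(\<forall>f\<in>ar1 A. phi M f \<in> cell B (inv1 B (F1 M f)) (F1 M (inv1 A f)))"
  and     "(\<forall>\<alpha>\<in>ar2 A. vc B (F2 M (inv2 A \<alpha>)) (phi M (s2 A \<alpha>))
        = vc B (phi M (t2 A \<alpha>)) (inv2 B (F2 M \<alpha>)))"
  and     "(\<forall>f\<in>ar1 A. \<forall>g\<in>ar1 A. \<forall>h\<in>ar1 A. t1 A f = s1 A g \<longrightarrow> t1 A g = s1 A h \<longrightarrow>
        vc B (F2 M (assoc A h g f))
          (vc B (phc M (hc1 A h g) f) (hc2 B (phc M h g) (vi B (F1 M f))))
        = vc B (phc M h (hc1 A g f))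
          (vc B (hc2 B (vi B (F1 M h)) (phc M g f)) (assoc B (F1 M h) (F1 M g) (F1 M f))))"
  and     "(\<forall>f\<in>ar1 A.
        vc B (F2 M (runit A f))
          (vc B (phc M f (idc A (s1 A f))) (hc2 B (vi B (F1 M f)) (phu M (s1 A f))))
        = runit B (F1 M f))"
  and     "(\<forall>f\<in>ar1 A.
        vc B (F2 M (lunit A f))
          (vc B (phc M (idc A (t1 A f)) f) (hc2 B (phu M (t1 A f)) (vi B (F1 M f))))
        = lunit B (F1 M f))"
  and     "(\<forall>f\<in>ar1 A.
        vc B (F2 M (evc A f))
          (vc B (phc M (inv1 A f) f) (hc2 B (phi M f) (vi B (F1 M f))))
        = vc B (phu M (s1 A f)) (evc B (F1 M f)))"
  and     "(\<forall>f\<in>ar1 A.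
        vc B (F2 M (coevc A f)) (phu M (t1 A f))
        = vc B (phc M f (inv1 A f))
            (vc B (hc2 B (vi B (F1 M f)) (phi M f)) (coevc B (F1 M f))))"
  shows "morphism A B M"
  using assms unfolding morphism_def by blast

lemma mem_hom: "f \<in> hom B X Y \<longleftrightarrow> f \<in> ar1 B \<and> s1 B f = X \<and> t1 B f = Y"
  by (simp add: hom_def)
lemma mem_cell: "\<alpha> \<in> cell B f g \<longleftrightarrow> \<alpha> \<in> ar2 B \<and> s2 B \<alpha> = f \<and> t2 B \<alpha> = g"
  by (simp add: cell_def)

context
  fixes B :: "('o,'m,'t) bigrpd"
  assumes bg: "bigroupoid B"
begin

lemma bg_obj: "f \<in> hom B X Y \<Longrightarrow> X \<in> obj B \<and> Y \<in> obj B"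
  using bigroupoidD(1)[OF bg] by (auto simp: mem_hom)
lemma bg_cell: "\<alpha> \<in> cell B f g \<Longrightarrow> \<exists>X Y. f \<in> hom B X Y \<and> g \<in> hom B X Y"
  using bigroupoidD(2)[OF bg] by (auto simp: mem_hom mem_cell)
lemma bg_cell_hom: "\<alpha> \<in> cell B f g \<Longrightarrow> f \<in> hom B X Y \<Longrightarrow> g \<in> hom B X Y"
  using bigroupoidD(2)[OF bg] by (auto simp: mem_hom mem_cell)
lemma bg_cell_hom': "\<alpha> \<in> cell B f g \<Longrightarrow> g \<in> hom B X Y \<Longrightarrow> f \<in> hom B X Y"
  using bigroupoidD(2)[OF bg] by (auto simp: mem_hom mem_cell)
lemma bg_vi: "f \<in> ar1 B \<Longrightarrow> vi B f \<in> cell B f f"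
  using bigroupoidD(3)[OF bg] by auto
lemma bg_vi': "f \<in> hom B X Y \<Longrightarrow> vi B f \<in> cell B f f"
  using bigroupoidD(3)[OF bg] by (auto simp: mem_hom)
lemma bg_vc: "\<alpha> \<in> cell B f g \<Longrightarrow> \<beta> \<in> cell B g h \<Longrightarrow> vc B \<beta> \<alpha> \<in> cell B f h"
  using bigroupoidD(4)[OF bg] by (auto simp: mem_cell)
lemma bg_vcassoc: "\<alpha> \<in> cell B f g \<Longrightarrow> \<beta> \<in> cell B g h \<Longrightarrow> \<gamma> \<in> cell B h k \<Longrightarrow>
    vc B \<gamma> (vc B \<beta> \<alpha>) = vc B (vc B \<gamma> \<beta>) \<alpha>"
  using bigroupoidD(5)[OF bg] by (auto simp: mem_cell)
lemma bg_lid: "\<alpha> \<in> cell B f g \<Longrightarrow> vc B (vi B g) \<alpha> = \<alpha>"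
  using bigroupoidD(6)[OF bg] by (auto simp: mem_cell)
lemma bg_rid: "\<alpha> \<in> cell B f g \<Longrightarrow> vc B \<alpha> (vi B f) = \<alpha>"
  using bigroupoidD(6)[OF bg] by (auto simp: mem_cell)
lemma bg_vinv: "\<alpha> \<in> cell B f g \<Longrightarrow> \<exists>\<beta>\<in>cell B g f. vc B \<beta> \<alpha> = vi B f \<and> vc B \<alpha> \<beta> = vi B g"
  using bigroupoidD(7)[OF bg] by (auto simp: mem_cell)
lemma bg_hc1: "f \<in> hom B X Y \<Longrightarrow> g \<in> hom B Y Z \<Longrightarrow> hc1 B g f \<in> hom B X Z"
  using bigroupoidD(8)[OF bg] by (auto simp: mem_hom)
lemma bg_hc2: "\<alpha> \<in> cell B f f' \<Longrightarrow> \<beta> \<in> cell B g g' \<Longrightarrow> f \<in> hom B X Y \<Longrightarrow> g \<in> hom B Y Z \<Longrightarrow>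
    hc2 B \<beta> \<alpha> \<in> cell B (hc1 B g f) (hc1 B g' f')"
  using bigroupoidD(9)[OF bg] by (auto simp: mem_hom mem_cell)
lemma bg_hcvi: "f \<in> hom B X Y \<Longrightarrow> g \<in> hom B Y Z \<Longrightarrow> hc2 B (vi B g) (vi B f) = vi B (hc1 B g f)"
  using bigroupoidD(10)[OF bg] by (auto simp: mem_hom)
lemma bg_interchange: "\<alpha> \<in> cell B f f' \<Longrightarrow> \<alpha>' \<in> cell B f' f'' \<Longrightarrow> \<beta> \<in> cell B g g' \<Longrightarrow> \<beta>' \<in> cell B g' g'' \<Longrightarrow>
    f \<in> hom B X Y \<Longrightarrow> g \<in> hom B Y Z \<Longrightarrow>
    hc2 B (vc B \<beta>' \<beta>) (vc B \<alpha>' \<alpha>) = vc B (hc2 B \<beta>' \<alpha>') (hc2 B \<beta> \<alpha>)"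
  using bigroupoidD(11)[OF bg] by (auto simp: mem_hom mem_cell)
lemma bg_idc: "X \<in> obj B \<Longrightarrow> idc B X \<in> hom B X X"
  using bigroupoidD(12)[OF bg] by auto
lemma bg_inv1: "f \<in> hom B X Y \<Longrightarrow> inv1 B f \<in> hom B Y X"
  using bigroupoidD(13)[OF bg] by (auto simp: mem_hom)
lemma bg_inv2: "\<alpha> \<in> cell B f g \<Longrightarrow> inv2 B \<alpha> \<in> cell B (inv1 B f) (inv1 B g)"
  using bigroupoidD(14)[OF bg] by (auto simp: mem_cell)
lemma bg_inv2vi: "f \<in> ar1 B \<Longrightarrow> inv2 B (vi B f) = vi B (inv1 B f)"
  using bigroupoidD(15)[OF bg] by auto
lemma bg_inv2vc: "\<alpha> \<in> cell B f g \<Longrightarrow> \<beta> \<in> cell B g h \<Longrightarrow> inv2 B (vc B \<beta> \<alpha>) = vc B (inv2 B \<beta>) (inv2 B \<alpha>)"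
  using bigroupoidD(16)[OF bg] by (auto simp: mem_cell)
lemma bg_assoc: "f \<in> hom B X Y \<Longrightarrow> g \<in> hom B Y Z \<Longrightarrow> h \<in> hom B Z W \<Longrightarrow>
    assoc B h g f \<in> cell B (hc1 B (hc1 B h g) f) (hc1 B h (hc1 B g f))"
  using bigroupoidD(17)[OF bg] by (auto simp: mem_hom)
lemma bg_assoc_nat: "\<alpha> \<in> cell B f f' \<Longrightarrow> \<beta> \<in> cell B g g' \<Longrightarrow> \<gamma> \<in> cell B h h' \<Longrightarrow>
    f \<in> hom B X Y \<Longrightarrow> g \<in> hom B Y Z \<Longrightarrow> h \<in> hom B Z W \<Longrightarrow>
    vc B (assoc B h' g' f') (hc2 B (hc2 B \<gamma> \<beta>) \<alpha>) = vc B (hc2 B \<gamma> (hc2 B \<beta> \<alpha>)) (assoc B h g f)"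
  using bigroupoidD(18)[OF bg] by (auto simp: mem_hom mem_cell)
lemma bg_lunit: "f \<in> hom B X Y \<Longrightarrow> lunit B f \<in> cell B (hc1 B (idc B Y) f) f"
  using bigroupoidD(19)[OF bg] by (auto simp: mem_hom)
lemma bg_lunit_nat: "\<alpha> \<in> cell B f g \<Longrightarrow> f \<in> hom B X Y \<Longrightarrow>
    vc B \<alpha> (lunit B f) = vc B (lunit B g) (hc2 B (vi B (idc B Y)) \<alpha>)"
  using bigroupoidD(20)[OF bg] by (auto simp: mem_hom mem_cell)
lemma bg_runit: "f \<in> hom B X Y \<Longrightarrow> runit B f \<in> cell B (hc1 B f (idc B X)) f"
  using bigroupoidD(21)[OF bg] by (auto simp: mem_hom)
lemma bg_runit_nat: "\<alpha> \<in> cell B f g \<Longrightarrow> f \<in> hom B X Y \<Longrightarrow>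
    vc B \<alpha> (runit B f) = vc B (runit B g) (hc2 B \<alpha> (vi B (idc B X)))"
  using bigroupoidD(22)[OF bg] by (auto simp: mem_hom mem_cell)
lemma bg_evc: "f \<in> hom B X Y \<Longrightarrow> evc B f \<in> cell B (hc1 B (inv1 B f) f) (idc B X)"
  using bigroupoidD(23)[OF bg] by (auto simp: mem_hom)
lemma bg_evc_nat: "\<alpha> \<in> cell B f g \<Longrightarrow> f \<in> hom B X Y \<Longrightarrow>
    vc B (vi B (idc B X)) (evc B f) = vc B (evc B g) (hc2 B (inv2 B \<alpha>) \<alpha>)"
  using bigroupoidD(24)[OF bg] by (auto simp: mem_hom mem_cell)
lemma bg_coevc: "f \<in> hom B X Y \<Longrightarrow> coevc B f \<in> cell B (idc B Y) (hc1 B f (inv1 B f))"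
  using bigroupoidD(25)[OF bg] by (auto simp: mem_hom)
lemma bg_coevc_nat: "\<alpha> \<in> cell B f g \<Longrightarrow> f \<in> hom B X Y \<Longrightarrow>
    vc B (hc2 B \<alpha> (inv2 B \<alpha>)) (coevc B f) = vc B (coevc B g) (vi B (idc B Y))"
  using bigroupoidD(26)[OF bg] by (auto simp: mem_hom mem_cell)
lemma bg_pent: "f \<in> hom B X Y \<Longrightarrow> g \<in> hom B Y Z \<Longrightarrow> h \<in> hom B Z W \<Longrightarrow> k \<in> hom B W V \<Longrightarrow>
    vc B (assoc B k h (hc1 B g f)) (assoc B (hc1 B k h) g f)
          = vc B (hc2 B (vi B k) (assoc B h g f))
              (vc B (assoc B k (hc1 B h g) f) (hc2 B (assoc B k h g) (vi B f)))"
  using bigroupoidD(27)[OF bg] by (auto simp: mem_hom)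
lemma bg_tri: "f \<in> hom B X Y \<Longrightarrow> g \<in> hom B Y Z \<Longrightarrow>
    vc B (hc2 B (vi B g) (lunit B f)) (assoc B g (idc B Y) f) = hc2 B (runit B g) (vi B f)"
  using bigroupoidD(28)[OF bg] unfolding mem_hom by metis
lemma bg_zz: "f \<in> ar1 B \<Longrightarrow>
    vc B (runit B f) (vc B (hc2 B (vi B f) (evc B f))
          (vc B (assoc B f (inv1 B f) f) (hc2 B (coevc B f) (vi B f)))) = lunit B f"
  using bigroupoidD(29)[OF bg] by auto
end

context
  fixes B :: "('o,'m,'t) bigrpd"
  assumes bg: "bigroupoid B"
begin
lemma bgs_s1_obj: "f \<in> ar1 B \<Longrightarrow> s1 B f \<in> obj B" and bgs_t1_obj: "f \<in> ar1 B \<Longrightarrow> t1 B f \<in> obj B"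
  using bigroupoidD(1)[OF bg] by auto
lemma bgs_s2: "\<alpha> \<in> ar2 B \<Longrightarrow> s2 B \<alpha> \<in> ar1 B" and bgs_t2: "\<alpha> \<in> ar2 B \<Longrightarrow> t2 B \<alpha> \<in> ar1 B"
  and bgs_s1t2: "\<alpha> \<in> ar2 B \<Longrightarrow> s1 B (t2 B \<alpha>) = s1 B (s2 B \<alpha>)"
  and bgs_t1t2: "\<alpha> \<in> ar2 B \<Longrightarrow> t1 B (t2 B \<alpha>) = t1 B (s2 B \<alpha>)"
  using bigroupoidD(2)[OF bg] by auto
lemma bgs_vi: "f \<in> ar1 B \<Longrightarrow> vi B f \<in> ar2 B" "f \<in> ar1 B \<Longrightarrow> s2 B (vi B f) = f" "f \<in> ar1 B \<Longrightarrow> t2 B (vi B f) = f"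
  using bigroupoidD(3)[OF bg] by (auto simp: mem_cell)
lemma bgs_vc: "\<alpha> \<in> ar2 B \<Longrightarrow> \<beta> \<in> ar2 B \<Longrightarrow> t2 B \<alpha> = s2 B \<beta> \<Longrightarrow> vc B \<beta> \<alpha> \<in> ar2 B"
   "\<alpha> \<in> ar2 B \<Longrightarrow> \<beta> \<in> ar2 B \<Longrightarrow> t2 B \<alpha> = s2 B \<beta> \<Longrightarrow> s2 B (vc B \<beta> \<alpha>) = s2 B \<alpha>"
   "\<alpha> \<in> ar2 B \<Longrightarrow> \<beta> \<in> ar2 B \<Longrightarrow> t2 B \<alpha> = s2 B \<beta> \<Longrightarrow> t2 B (vc B \<beta> \<alpha>) = t2 B \<beta>"
  using bigroupoidD(4)[OF bg] by (auto simp: mem_cell)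
lemma bgs_hc1: "f \<in> ar1 B \<Longrightarrow> g \<in> ar1 B \<Longrightarrow> t1 B f = s1 B g \<Longrightarrow> hc1 B g f \<in> ar1 B"
  "f \<in> ar1 B \<Longrightarrow> g \<in> ar1 B \<Longrightarrow> t1 B f = s1 B g \<Longrightarrow> s1 B (hc1 B g f) = s1 B f"
  "f \<in> ar1 B \<Longrightarrow> g \<in> ar1 B \<Longrightarrow> t1 B f = s1 B g \<Longrightarrow> t1 B (hc1 B g f) = t1 B g"
  using bigroupoidD(8)[OF bg] by (auto simp: mem_hom)
lemma bgs_hc2: "\<alpha> \<in> ar2 B \<Longrightarrow> \<beta> \<in> ar2 B \<Longrightarrow> t1 B (s2 B \<alpha>) = s1 B (s2 B \<beta>) \<Longrightarrow> hc2 B \<beta> \<alpha> \<in> ar2 B"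
  "\<alpha> \<in> ar2 B \<Longrightarrow> \<beta> \<in> ar2 B \<Longrightarrow> t1 B (s2 B \<alpha>) = s1 B (s2 B \<beta>) \<Longrightarrow> s2 B (hc2 B \<beta> \<alpha>) = hc1 B (s2 B \<beta>) (s2 B \<alpha>)"
  "\<alpha> \<in> ar2 B \<Longrightarrow> \<beta> \<in> ar2 B \<Longrightarrow> t1 B (s2 B \<alpha>) = s1 B (s2 B \<beta>) \<Longrightarrow> t2 B (hc2 B \<beta> \<alpha>) = hc1 B (t2 B \<beta>) (t2 B \<alpha>)"
  using bigroupoidD(9)[OF bg] by (auto simp: mem_cell)
lemma bgs_hcvi: "f \<in> ar1 B \<Longrightarrow> g \<in> ar1 B \<Longrightarrow> t1 B f = s1 B g \<Longrightarrow> hc2 B (vi B g) (vi B f) = vi B (hc1 B g f)"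
  using bigroupoidD(10)[OF bg] by auto
lemma bgs_idc: "X \<in> obj B \<Longrightarrow> idc B X \<in> ar1 B" "X \<in> obj B \<Longrightarrow> s1 B (idc B X) = X" "X \<in> obj B \<Longrightarrow> t1 B (idc B X) = X"
  using bigroupoidD(12)[OF bg] by (auto simp: mem_hom)
lemma bgs_inv1: "f \<in> ar1 B \<Longrightarrow> inv1 B f \<in> ar1 B" "f \<in> ar1 B \<Longrightarrow> s1 B (inv1 B f) = t1 B f" "f \<in> ar1 B \<Longrightarrow> t1 B (inv1 B f) = s1 B f"
  using bigroupoidD(13)[OF bg] by (auto simp: mem_hom)
lemma bgs_inv2: "\<alpha> \<in> ar2 B \<Longrightarrow> inv2 B \<alpha> \<in> ar2 B" "\<alpha> \<in> ar2 B \<Longrightarrow> s2 B (inv2 B \<alpha>) = inv1 B (s2 B \<alpha>)"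
  "\<alpha> \<in> ar2 B \<Longrightarrow> t2 B (inv2 B \<alpha>) = inv1 B (t2 B \<alpha>)"
  using bigroupoidD(14)[OF bg] by (auto simp: mem_cell)
lemma bgs_inv2vi: "f \<in> ar1 B \<Longrightarrow> inv2 B (vi B f) = vi B (inv1 B f)"
  using bigroupoidD(15)[OF bg] by auto
lemma bgs_assoc: "f \<in> ar1 B \<Longrightarrow> g \<in> ar1 B \<Longrightarrow> h \<in> ar1 B \<Longrightarrow> t1 B f = s1 B g \<Longrightarrow> t1 B g = s1 B h \<Longrightarrow>
    assoc B h g f \<in> ar2 B"
  "f \<in> ar1 B \<Longrightarrow> g \<in> ar1 B \<Longrightarrow> h \<in> ar1 B \<Longrightarrow> t1 B f = s1 B g \<Longrightarrow> t1 B g = s1 B h \<Longrightarrow>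
    s2 B (assoc B h g f) = hc1 B (hc1 B h g) f"
  "f \<in> ar1 B \<Longrightarrow> g \<in> ar1 B \<Longrightarrow> h \<in> ar1 B \<Longrightarrow> t1 B f = s1 B g \<Longrightarrow> t1 B g = s1 B h \<Longrightarrow>
    t2 B (assoc B h g f) = hc1 B h (hc1 B g f)"
  using bigroupoidD(17)[OF bg] by (auto simp: mem_cell)
lemma bgs_lunit: "f \<in> ar1 B \<Longrightarrow> lunit B f \<in> ar2 B" "f \<in> ar1 B \<Longrightarrow> s2 B (lunit B f) = hc1 B (idc B (t1 B f)) f"
  "f \<in> ar1 B \<Longrightarrow> t2 B (lunit B f) = f"
  using bigroupoidD(19)[OF bg] by (auto simp: mem_cell)
lemma bgs_runit: "f \<in> ar1 B \<Longrightarrow> runit B f \<in> ar2 B" "f \<in> ar1 B \<Longrightarrow> s2 B (runit B f) = hc1 B f (idc B (s1 B f))"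
  "f \<in> ar1 B \<Longrightarrow> t2 B (runit B f) = f"
  using bigroupoidD(21)[OF bg] by (auto simp: mem_cell)
lemma bgs_evc: "f \<in> ar1 B \<Longrightarrow> evc B f \<in> ar2 B" "f \<in> ar1 B \<Longrightarrow> s2 B (evc B f) = hc1 B (inv1 B f) f"
  "f \<in> ar1 B \<Longrightarrow> t2 B (evc B f) = idc B (s1 B f)"
  using bigroupoidD(23)[OF bg] by (auto simp: mem_cell)
lemma bgs_coevc: "f \<in> ar1 B \<Longrightarrow> coevc B f \<in> ar2 B" "f \<in> ar1 B \<Longrightarrow> s2 B (coevc B f) = idc B (t1 B f)"
  "f \<in> ar1 B \<Longrightarrow> t2 B (coevc B f) = hc1 B f (inv1 B f)"
  using bigroupoidD(25)[OF bg] by (auto simp: mem_cell)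
lemma bgs_lid: "\<alpha> \<in> ar2 B \<Longrightarrow> t2 B \<alpha> = g \<Longrightarrow> vc B (vi B g) \<alpha> = \<alpha>"
  and bgs_rid: "\<alpha> \<in> ar2 B \<Longrightarrow> s2 B \<alpha> = f \<Longrightarrow> vc B \<alpha> (vi B f) = \<alpha>"
  using bigroupoidD(6)[OF bg] by auto

lemmas bgsimps = bgs_s1_obj bgs_t1_obj bgs_s2 bgs_t2 bgs_s1t2 bgs_t1t2 bgs_vi bgs_vc bgs_hc1 bgs_hc2 bgs_hcvi
  bgs_idc bgs_inv1 bgs_inv2 bgs_inv2vi bgs_assoc bgs_lunit bgs_runit bgs_evc bgs_coevc bgs_lid bgs_rid
end

definition H0 :: "('ao,'am,'at,'co,'cm,'ct) bmor \<Rightarrow> 'ao + 'co \<Rightarrow> 'co" where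
  "H0 M X = (case X of Inl a \<Rightarrow> F0 M a | Inr c \<Rightarrow> c)"

lemma H0_simps[simp]: "H0 M (Inl a) = F0 M a" "H0 M (Inr c) = c"
  by (simp_all add: H0_def)

fun H1 :: "('ao,'am,'at,'co,'cm,'ct) bmor \<Rightarrow> ('o,'am + 'cm) cterm \<Rightarrow> 'cm" where
  "H1 M (CGen X (Inl f) Y) = F1 M f"
| "H1 M (CGen X (Inr c) Y) = c"
| "H1 M _ = undefined"

fun cs :: "('o,'g) cterm \<Rightarrow> 'o" where
  "cs (CGen X m Y) = X"
| "cs _ = undefined"

fun ct :: "('o,'g) cterm \<Rightarrow> 'o" where
  "ct (CGen X m Y) = Y"
| "ct _ = undefined"

definition mid :: "'x \<times> ('at + 'ct) \<times> 'y \<Rightarrow> 'ct" where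
  "mid \<alpha> = (case fst (snd \<alpha>) of Inl _ \<Rightarrow> undefined | Inr c \<Rightarrow> c)"

lemma mid_simp[simp]: "mid (x, Inr c, y) = c"
  by (simp add: mid_def)

definition OB :: "('ao,'am,'at) bigrpd \<Rightarrow> ('co,'cm,'ct) bigrpd \<Rightarrow> ('ao + 'co) set" where
  "OB A C = Inl ` obj A \<union> Inr ` obj C"

definition AR1 :: "('ao,'am,'at) bigrpd \<Rightarrow> ('co,'cm,'ct) bigrpd \<Rightarrow> ('ao,'am,'at,'co,'cm,'ct) bmor
   \<Rightarrow> ('ao + 'co, 'am + 'cm) cterm set" where
  "AR1 A C M = {x. \<exists>X m Y. x = CGen X m Y \<and> X \<in> OB A C \<and> Y \<in> OB A C \<and>
      (case m of Inl f \<Rightarrow> f \<in> ar1 A \<and> X = Inl (s1 A f) \<and> Y = Inl (t1 A f)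
               | Inr c \<Rightarrow> c \<in> hom C (H0 M X) (H0 M Y))}"

definition AR2 :: "('ao,'am,'at) bigrpd \<Rightarrow> ('co,'cm,'ct) bigrpd \<Rightarrow> ('ao,'am,'at,'co,'cm,'ct) bmor
   \<Rightarrow> (('ao + 'co, 'am + 'cm) cterm \<times> ('at + 'ct) \<times> ('ao + 'co, 'am + 'cm) cterm) set" where
  "AR2 A C M = {\<alpha>. fst \<alpha> \<in> AR1 A C M \<and> snd (snd \<alpha>) \<in> AR1 A C M \<and>
      cs (fst \<alpha>) = cs (snd (snd \<alpha>)) \<and> ct (fst \<alpha>) = ct (snd (snd \<alpha>)) \<and>
      fst (snd \<alpha>) = Inr (mid \<alpha>) \<and> mid \<alpha> \<in> cell C (H1 M (fst \<alpha>)) (H1 M (snd (snd \<alpha>)))}"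

definition hcB :: "('co,'cm,'ct) bigrpd \<Rightarrow> ('ao,'am,'at,'co,'cm,'ct) bmor
   \<Rightarrow> ('o, 'am + 'cm) cterm \<Rightarrow> ('o, 'am + 'cm) cterm \<Rightarrow> ('o, 'am + 'cm) cterm" where
  "hcB C M g f = CGen (cs f) (Inr (hc1 C (H1 M g) (H1 M f))) (ct g)"

definition idB :: "('co,'cm,'ct) bigrpd \<Rightarrow> ('ao,'am,'at,'co,'cm,'ct) bmor
   \<Rightarrow> 'ao + 'co \<Rightarrow> ('ao + 'co, 'am + 'cm) cterm" where
  "idB C M X = CGen X (Inr (idc C (H0 M X))) X"

definition invB :: "('co,'cm,'ct) bigrpd \<Rightarrow> ('ao,'am,'at,'co,'cm,'ct) bmor
   \<Rightarrow> ('o, 'am + 'cm) cterm \<Rightarrow> ('o, 'am + 'cm) cterm" where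
  "invB C M f = CGen (ct f) (Inr (inv1 C (H1 M f))) (cs f)"

lemma B1_simps[simp]:
  "cs (hcB C M g f) = cs f" "ct (hcB C M g f) = ct g" "H1 M (hcB C M g f) = hc1 C (H1 M g) (H1 M f)"
  "cs (idB C M X) = X" "ct (idB C M X) = X" "H1 M (idB C M X) = idc C (H0 M X)"
  "cs (invB C M f) = ct f" "ct (invB C M f) = cs f" "H1 M (invB C M f) = inv1 C (H1 M f)"
  by (simp_all add: hcB_def idB_def invB_def)

definition Bmid :: "('ao,'am,'at) bigrpd \<Rightarrow> ('co,'cm,'ct) bigrpd \<Rightarrow> ('ao,'am,'at,'co,'cm,'ct) bmor
   \<Rightarrow> ('ao,'am,'at,'co,'cm,'ct) mid_bigrpd" where
  "Bmid A C M = \<lparr> obj = OB A C, ar1 = AR1 A C M, ar2 = AR2 A C M,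
     s1 = cs, t1 = ct, s2 = fst, t2 = (\<lambda>\<alpha>. snd (snd \<alpha>)),
     vc = (\<lambda>\<beta> \<alpha>. (fst \<alpha>, Inr (vc C (mid \<beta>) (mid \<alpha>)), snd (snd \<beta>))),
     vi = (\<lambda>f. (f, Inr (vi C (H1 M f)), f)),
     hc1 = hcB C M,
     hc2 = (\<lambda>\<beta> \<alpha>. (hcB C M (fst \<beta>) (fst \<alpha>), Inr (hc2 C (mid \<beta>) (mid \<alpha>)),
                  hcB C M (snd (snd \<beta>)) (snd (snd \<alpha>)))),
     idc = idB C M,
     inv1 = invB C M,
     inv2 = (\<lambda>\<alpha>. (invB C M (fst \<alpha>), Inr (inv2 C (mid \<alpha>)), invB C M (snd (snd \<alpha>)))),
     assoc = (\<lambda>h g f. (hcB C M (hcB C M h g) f, Inr (assoc C (H1 M h) (H1 M g) (H1 M f)),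
                       hcB C M h (hcB C M g f))),
     lunit = (\<lambda>f. (hcB C M (idB C M (ct f)) f, Inr (lunit C (H1 M f)), f)),
     runit = (\<lambda>f. (hcB C M f (idB C M (cs f)), Inr (runit C (H1 M f)), f)),
     evc = (\<lambda>f. (hcB C M (invB C M f) f, Inr (evc C (H1 M f)), idB C M (cs f))),
     coevc = (\<lambda>f. (idB C M (ct f), Inr (coevc C (H1 M f)), hcB C M f (invB C M f))) \<rparr>"

definition G1 :: "('ao,'am,'at) bigrpd \<Rightarrow> 'am \<Rightarrow> ('ao + 'co, 'am + 'cm) cterm" where
  "G1 A f = CGen (Inl (s1 A f)) (Inl f) (Inl (t1 A f))"

lemma G1_simps[simp]: "cs (G1 A f) = Inl (s1 A f)" "ct (G1 A f) = Inl (t1 A f)" "H1 M (G1 A f) = F1 M f"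
  by (simp_all add: G1_def)

definition Gm :: "('ao,'am,'at) bigrpd \<Rightarrow> ('co,'cm,'ct) bigrpd \<Rightarrow> ('ao,'am,'at,'co,'cm,'ct) bmor
   \<Rightarrow> ('ao,'am,'at,'ao + 'co, ('ao + 'co, 'am + 'cm) cterm,
        ('ao + 'co, 'am + 'cm) cterm \<times> ('at + 'ct) \<times> ('ao + 'co, 'am + 'cm) cterm) bmor" where
  "Gm A C M =
     \<lparr> F0 = Inl, F1 = G1 A,
       F2 = (\<lambda>\<alpha>. (G1 A (s2 A \<alpha>), Inr (F2 M \<alpha>), G1 A (t2 A \<alpha>))),
       phc = (\<lambda>g f. (hcB C M (G1 A g) (G1 A f), Inr (phc M g f), G1 A (hc1 A g f))),
       phu = (\<lambda>X. (idB C M (Inl X), Inr (phu M X), G1 A (idc A X))),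
       phi = (\<lambda>f. (invB C M (G1 A f), Inr (phi M f), G1 A (inv1 A f))) \<rparr>"

definition Hm :: "('co,'cm,'ct) bigrpd \<Rightarrow> ('ao,'am,'at,'co,'cm,'ct) bmor
   \<Rightarrow> ('ao + 'co, ('ao + 'co, 'am + 'cm) cterm,
        ('ao + 'co, 'am + 'cm) cterm \<times> ('at + 'ct) \<times> ('ao + 'co, 'am + 'cm) cterm,'co,'cm,'ct) bmor" where
  "Hm C M =
     \<lparr> F0 = H0 M, F1 = H1 M, F2 = mid,
       phc = (\<lambda>g f. vi C (hc1 C (H1 M g) (H1 M f))),
       phu = (\<lambda>X. vi C (idc C (H0 M X))),
       phi = (\<lambda>f. vi C (inv1 C (H1 M f))) \<rparr>"

lemma Gm_simps[simp]:
  "F0 (Gm A C M) = Inl" "F1 (Gm A C M) = G1 A"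
  "F2 (Gm A C M) \<alpha> = (G1 A (s2 A \<alpha>), Inr (F2 M \<alpha>), G1 A (t2 A \<alpha>))"
  "phc (Gm A C M) g f = (hcB C M (G1 A g) (G1 A f), Inr (phc M g f), G1 A (hc1 A g f))"
  "phu (Gm A C M) X = (idB C M (Inl X), Inr (phu M X), G1 A (idc A X))"
  "phi (Gm A C M) f = (invB C M (G1 A f), Inr (phi M f), G1 A (inv1 A f))"
  by (simp_all add: Gm_def)

lemma Hm_simps[simp]:
  "F0 (Hm C M) = H0 M" "F1 (Hm C M) = H1 M" "F2 (Hm C M) = mid"
  "phc (Hm C M) g f = vi C (hc1 C (H1 M g) (H1 M f))"
  "phu (Hm C M) X = vi C (idc C (H0 M X))"
  "phi (Hm C M) f = vi C (inv1 C (H1 M f))"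
  by (simp_all add: Hm_def)

lemma Bmid_simps[simp]:
  "obj (Bmid A C M) = OB A C" "ar1 (Bmid A C M) = AR1 A C M" "ar2 (Bmid A C M) = AR2 A C M"
  "s1 (Bmid A C M) = cs" "t1 (Bmid A C M) = ct" "s2 (Bmid A C M) = fst" "t2 (Bmid A C M) = (\<lambda>\<alpha>. snd (snd \<alpha>))"
  "vc (Bmid A C M) \<beta> \<alpha> = (fst \<alpha>, Inr (vc C (mid \<beta>) (mid \<alpha>)), snd (snd \<beta>))"
  "vi (Bmid A C M) f = (f, Inr (vi C (H1 M f)), f)"
  "hc1 (Bmid A C M) = hcB C M"
  "hc2 (Bmid A C M) \<beta> \<alpha> = (hcB C M (fst \<beta>) (fst \<alpha>), Inr (hc2 C (mid \<beta>) (mid \<alpha>)),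
                  hcB C M (snd (snd \<beta>)) (snd (snd \<alpha>)))"
  "idc (Bmid A C M) = idB C M"
  "inv1 (Bmid A C M) = invB C M"
  "inv2 (Bmid A C M) \<alpha> = (invB C M (fst \<alpha>), Inr (inv2 C (mid \<alpha>)), invB C M (snd (snd \<alpha>)))"
  "assoc (Bmid A C M) h g f = (hcB C M (hcB C M h g) f, Inr (assoc C (H1 M h) (H1 M g) (H1 M f)),
                       hcB C M h (hcB C M g f))"
  "lunit (Bmid A C M) f = (hcB C M (idB C M (ct f)) f, Inr (lunit C (H1 M f)), f)"
  "runit (Bmid A C M) f = (hcB C M f (idB C M (cs f)), Inr (runit C (H1 M f)), f)"
  "evc (Bmid A C M) f = (hcB C M (invB C M f) f, Inr (evc C (H1 M f)), idB C M (cs f))"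
  "coevc (Bmid A C M) f = (idB C M (ct f), Inr (coevc C (H1 M f)), hcB C M f (invB C M f))"
  by (simp_all add: Bmid_def)

lemma mem_AR2: "\<alpha> \<in> AR2 A C M \<longleftrightarrow> fst \<alpha> \<in> AR1 A C M \<and> snd (snd \<alpha>) \<in> AR1 A C M \<and>
      cs (fst \<alpha>) = cs (snd (snd \<alpha>)) \<and> ct (fst \<alpha>) = ct (snd (snd \<alpha>)) \<and>
      fst (snd \<alpha>) = Inr (mid \<alpha>) \<and> mid \<alpha> \<in> cell C (H1 M (fst \<alpha>)) (H1 M (snd (snd \<alpha>)))"
  by (simp add: AR2_def)

lemma AR2_eq: "\<alpha> \<in> AR2 A C M \<Longrightarrow> \<alpha> = (fst \<alpha>, Inr (mid \<alpha>), snd (snd \<alpha>))"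
  by (simp add: mem_AR2 prod_eq_iff)

locale fctx =
  fixes A :: "('ao,'am,'at) bigrpd" and C :: "('co,'cm,'ct) bigrpd"
    and M :: "('ao,'am,'at,'co,'cm,'ct) bmor"
  assumes bA: "bigroupoid A" and bC: "bigroupoid C" and mM: "morphism A C M"
begin

lemmas CX = bigroupoidD[OF bC]
lemmas AX = bigroupoidD[OF bA]
lemmas MX = morphismD[OF mM]

lemma OB_C: "X \<in> OB A C \<Longrightarrow> H0 M X \<in> obj C"
  using MX(1) by (auto simp: OB_def)

lemma AR1D: "f \<in> AR1 A C M \<Longrightarrow> cs f \<in> OB A C \<and> ct f \<in> OB A C \<and> H1 M f \<in> hom C (H0 M (cs f)) (H0 M (ct f))"
  unfolding AR1_def
proof (clarify)
  fix X m Y assume h: "X \<in> OB A C" "Y \<in> OB A C" "case m of Inl f \<Rightarrow> f \<in> ar1 A \<and> X = Inl (s1 A f) \<and> Y = Inl (t1 A f)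
               | Inr c \<Rightarrow> c \<in> hom C (H0 M X) (H0 M Y)"
  show "cs (CGen X m Y) \<in> OB A C \<and> ct (CGen X m Y) \<in> OB A C \<and> H1 M (CGen X m Y) \<in> hom C (H0 M (cs (CGen X m Y))) (H0 M (ct (CGen X m Y)))"
    using h MX(2) by (cases m) auto
qed

lemma AR1I: "X \<in> OB A C \<Longrightarrow> Y \<in> OB A C \<Longrightarrow> c \<in> hom C (H0 M X) (H0 M Y) \<Longrightarrow> CGen X (Inr c) Y \<in> AR1 A C M"
  by (auto simp: AR1_def)

lemma G1_AR1: "f \<in> ar1 A \<Longrightarrow> G1 A f \<in> AR1 A C M"
  using AX(1) by (auto simp: AR1_def G1_def OB_def)

end

context fctx begin

lemma H1hom: "f \<in> AR1 A C M \<Longrightarrow> H1 M f \<in> hom C (H0 M (cs f)) (H0 M (ct f))"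
  using AR1D by blast
lemma H1ar1[simp]: "f \<in> AR1 A C M \<Longrightarrow> H1 M f \<in> ar1 C"
  using AR1D by (auto simp: mem_hom)
lemma csOB: "f \<in> AR1 A C M \<Longrightarrow> cs f \<in> OB A C"
  using AR1D by blast
lemma ctOB: "f \<in> AR1 A C M \<Longrightarrow> ct f \<in> OB A C"
  using AR1D by blast

lemma tuple_AR2[simp]: "(f, Inr \<gamma>, g) \<in> AR2 A C M \<longleftrightarrow> f \<in> AR1 A C M \<and> g \<in> AR1 A C M \<and> cs f = cs g \<and> ct f = ct g
   \<and> \<gamma> \<in> cell C (H1 M f) (H1 M g)"
  by (simp add: mem_AR2)

lemma AR2E:
  assumes "\<alpha> \<in> AR2 A C M"
  obtains f \<gamma> g where "\<alpha> = (f, Inr \<gamma>, g)" "f \<in> AR1 A C M" "g \<in> AR1 A C M" "cs f = cs g" "ct f = ct g"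
    "\<gamma> \<in> cell C (H1 M f) (H1 M g)"
    "H1 M f \<in> hom C (H0 M (cs f)) (H0 M (ct f))" "H1 M g \<in> hom C (H0 M (cs f)) (H0 M (ct f))"
  using assms by (metis AR2_eq mem_AR2 H1hom)

lemma cellB[simp]: "\<alpha> \<in> cell (Bmid A C M) f g \<longleftrightarrow> \<alpha> \<in> AR2 A C M \<and> fst \<alpha> = f \<and> snd (snd \<alpha>) = g"
  by (simp add: mem_cell)
lemma homB[simp]: "f \<in> hom (Bmid A C M) X Y \<longleftrightarrow> f \<in> AR1 A C M \<and> cs f = X \<and> ct f = Y"
  by (simp add: mem_hom)

lemma hcB_AR1[simp]: "f \<in> AR1 A C M \<Longrightarrow> g \<in> AR1 A C M \<Longrightarrow> ct f = cs g \<Longrightarrow> hcB C M g f \<in> AR1 A C M"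
  unfolding hcB_def by (metis AR1I H1hom bg_hc1[OF bC] csOB ctOB)
lemma idB_AR1[simp]: "X \<in> OB A C \<Longrightarrow> idB C M X \<in> AR1 A C M"
  unfolding idB_def by (metis AR1I OB_C bg_idc[OF bC])
lemma invB_AR1[simp]: "f \<in> AR1 A C M \<Longrightarrow> invB C M f \<in> AR1 A C M"
  unfolding invB_def by (metis AR1I H1hom bg_inv1[OF bC] csOB ctOB)

lemma H1_s1[simp]: "f \<in> AR1 A C M \<Longrightarrow> s1 C (H1 M f) = H0 M (cs f)"
  and H1_t1[simp]: "f \<in> AR1 A C M \<Longrightarrow> t1 C (H1 M f) = H0 M (ct f)"
  using AR1D by (auto simp: mem_hom)
lemma OB_C'[simp]: "X \<in> OB A C \<Longrightarrow> H0 M X \<in> obj C" by (rule OB_C)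
lemmas Cc = bgsimps[OF bC]
lemmas Cs = bg_vi'[OF bC] bg_vc[OF bC] bg_vcassoc[OF bC] bg_lid[OF bC] bg_rid[OF bC]
  bg_hc1[OF bC] bg_hc2[OF bC] bg_hcvi[OF bC] bg_interchange[OF bC] bg_idc[OF bC] bg_inv1[OF bC]
  bg_inv2[OF bC] bg_inv2vi[OF bC] bg_inv2vc[OF bC] bg_assoc[OF bC] bg_assoc_nat[OF bC]
  bg_lunit[OF bC] bg_lunit_nat[OF bC] bg_runit[OF bC] bg_runit_nat[OF bC] bg_evc[OF bC]
  bg_evc_nat[OF bC] bg_coevc[OF bC] bg_coevc_nat[OF bC] bg_pent[OF bC] bg_tri[OF bC] bg_zz[OF bC]

lemma bB1: "(\<forall>f\<in>ar1 (Bmid A C M). s1 (Bmid A C M) f \<in> obj (Bmid A C M) \<and> t1 (Bmid A C M) f \<in> obj (Bmid A C M))"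
  unfolding Bmid_simps
  by (auto elim!: AR2E simp: Cs csOB ctOB H1hom)

lemma bB2: "(\<forall>\<alpha>\<in>ar2 (Bmid A C M). s2 (Bmid A C M) \<alpha> \<in> ar1 (Bmid A C M) \<and> t2 (Bmid A C M) \<alpha> \<in> ar1 (Bmid A C M) \<and>
        s1 (Bmid A C M) (s2 (Bmid A C M) \<alpha>) = s1 (Bmid A C M) (t2 (Bmid A C M) \<alpha>) \<and> t1 (Bmid A C M) (s2 (Bmid A C M) \<alpha>) = t1 (Bmid A C M) (t2 (Bmid A C M) \<alpha>))"
  unfolding Bmid_simps
  by (auto elim!: AR2E simp: Cs csOB ctOB H1hom)

lemma bB3: "(\<forall>f\<in>ar1 (Bmid A C M). vi (Bmid A C M) f \<in> cell (Bmid A C M) f f)"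
  unfolding Bmid_simps
  apply (intro ballI impI)
  subgoal for f using H1hom[of f] by (auto simp: Cs csOB ctOB)
  done

lemma bB4: "(\<forall>\<alpha>\<in>ar2 (Bmid A C M). \<forall>\<beta>\<in>ar2 (Bmid A C M). t2 (Bmid A C M) \<alpha> = s2 (Bmid A C M) \<beta> \<longrightarrow>
        vc (Bmid A C M) \<beta> \<alpha> \<in> cell (Bmid A C M) (s2 (Bmid A C M) \<alpha>) (t2 (Bmid A C M) \<beta>))"
  unfolding Bmid_simps
  by (auto elim!: AR2E simp: Cs csOB ctOB H1hom)

lemma bB5: "(\<forall>\<alpha>\<in>ar2 (Bmid A C M). \<forall>\<beta>\<in>ar2 (Bmid A C M). \<forall>\<gamma>\<in>ar2 (Bmid A C M). t2 (Bmid A C M) \<alpha> = s2 (Bmid A C M) \<beta> \<longrightarrow> t2 (Bmid A C M) \<beta> = s2 (Bmid A C M) \<gamma> \<longrightarrow>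
        vc (Bmid A C M) \<gamma> (vc (Bmid A C M) \<beta> \<alpha>) = vc (Bmid A C M) (vc (Bmid A C M) \<gamma> \<beta>) \<alpha>)"
  unfolding Bmid_simps
  by (auto elim!: AR2E simp: Cs csOB ctOB H1hom)

lemma bB6: "(\<forall>\<alpha>\<in>ar2 (Bmid A C M). vc (Bmid A C M) (vi (Bmid A C M) (t2 (Bmid A C M) \<alpha>)) \<alpha> = \<alpha> \<and> vc (Bmid A C M) \<alpha> (vi (Bmid A C M) (s2 (Bmid A C M) \<alpha>)) = \<alpha>)"
  unfolding Bmid_simps
  by (auto elim!: AR2E simp: Cs csOB ctOB H1hom)

lemma bB7: "(\<forall>\<alpha>\<in>ar2 (Bmid A C M). \<exists>\<beta>\<in>cell (Bmid A C M) (t2 (Bmid A C M) \<alpha>) (s2 (Bmid A C M) \<alpha>).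
        vc (Bmid A C M) \<beta> \<alpha> = vi (Bmid A C M) (s2 (Bmid A C M) \<alpha>) \<and> vc (Bmid A C M) \<alpha> \<beta> = vi (Bmid A C M) (t2 (Bmid A C M) \<alpha>))"
  proof (intro ballI)
  fix \<alpha> assume a: "\<alpha> \<in> ar2 (Bmid A C M)"
  then obtain f \<gamma> g where h: "\<alpha> = (f, Inr \<gamma>, g)" "f \<in> AR1 A C M" "g \<in> AR1 A C M" "cs f = cs g" "ct f = ct g"
    "\<gamma> \<in> cell C (H1 M f) (H1 M g)" by (auto elim: AR2E)
  obtain \<beta> where b: "\<beta> \<in> cell C (H1 M g) (H1 M f)" "vc C \<beta> \<gamma> = vi C (H1 M f)" "vc C \<gamma> \<beta> = vi C (H1 M g)"
    using bg_vinv[OF bC h(6)] by blast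
  have "(g, Inr \<beta>, f) \<in> cell (Bmid A C M) (t2 (Bmid A C M) \<alpha>) (s2 (Bmid A C M) \<alpha>) \<and>
     vc (Bmid A C M) (g, Inr \<beta>, f) \<alpha> = vi (Bmid A C M) (s2 (Bmid A C M) \<alpha>) \<and>
     vc (Bmid A C M) \<alpha> (g, Inr \<beta>, f) = vi (Bmid A C M) (t2 (Bmid A C M) \<alpha>)"
    using h b by simp
  then show "\<exists>\<beta>\<in>cell (Bmid A C M) (t2 (Bmid A C M) \<alpha>) (s2 (Bmid A C M) \<alpha>).
        vc (Bmid A C M) \<beta> \<alpha> = vi (Bmid A C M) (s2 (Bmid A C M) \<alpha>) \<and> vc (Bmid A C M) \<alpha> \<beta> = vi (Bmid A C M) (t2 (Bmid A C M) \<alpha>)"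
    by blast
qed

lemma bB8: "(\<forall>f\<in>ar1 (Bmid A C M). \<forall>g\<in>ar1 (Bmid A C M). t1 (Bmid A C M) f = s1 (Bmid A C M) g \<longrightarrow> hc1 (Bmid A C M) g f \<in> hom (Bmid A C M) (s1 (Bmid A C M) f) (t1 (Bmid A C M) g))"
  unfolding Bmid_simps
  by (auto elim!: AR2E simp: Cs csOB ctOB H1hom)

lemma bB9: "(\<forall>\<alpha>\<in>ar2 (Bmid A C M). \<forall>\<beta>\<in>ar2 (Bmid A C M). t1 (Bmid A C M) (s2 (Bmid A C M) \<alpha>) = s1 (Bmid A C M) (s2 (Bmid A C M) \<beta>) \<longrightarrow>
        hc2 (Bmid A C M) \<beta> \<alpha> \<in> cell (Bmid A C M) (hc1 (Bmid A C M) (s2 (Bmid A C M) \<beta>) (s2 (Bmid A C M) \<alpha>)) (hc1 (Bmid A C M) (t2 (Bmid A C M) \<beta>) (t2 (Bmid A C M) \<alpha>)))"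
  unfolding Bmid_simps
  by (auto elim!: AR2E simp: Cs csOB ctOB H1hom)

lemma bB10: "(\<forall>f\<in>ar1 (Bmid A C M). \<forall>g\<in>ar1 (Bmid A C M). t1 (Bmid A C M) f = s1 (Bmid A C M) g \<longrightarrow> hc2 (Bmid A C M) (vi (Bmid A C M) g) (vi (Bmid A C M) f) = vi (Bmid A C M) (hc1 (Bmid A C M) g f))"
  unfolding Bmid_simps
  apply (intro ballI impI)
  subgoal for f g using H1hom[of f] H1hom[of g] by (auto simp: Cs csOB ctOB)
  done

lemma bB11: "(\<forall>\<alpha>\<in>ar2 (Bmid A C M). \<forall>\<alpha>'\<in>ar2 (Bmid A C M). \<forall>\<beta>\<in>ar2 (Bmid A C M). \<forall>\<beta>'\<in>ar2 (Bmid A C M).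
        t2 (Bmid A C M) \<alpha> = s2 (Bmid A C M) \<alpha>' \<longrightarrow> t2 (Bmid A C M) \<beta> = s2 (Bmid A C M) \<beta>' \<longrightarrow> t1 (Bmid A C M) (s2 (Bmid A C M) \<alpha>) = s1 (Bmid A C M) (s2 (Bmid A C M) \<beta>) \<longrightarrow>
        hc2 (Bmid A C M) (vc (Bmid A C M) \<beta>' \<beta>) (vc (Bmid A C M) \<alpha>' \<alpha>) = vc (Bmid A C M) (hc2 (Bmid A C M) \<beta>' \<alpha>') (hc2 (Bmid A C M) \<beta> \<alpha>))"
  unfolding Bmid_simps
  by (auto elim!: AR2E simp: Cs csOB ctOB H1hom)

lemma bB12: "(\<forall>X\<in>obj (Bmid A C M). idc (Bmid A C M) X \<in> hom (Bmid A C M) X X)"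
  unfolding Bmid_simps
  by (auto elim!: AR2E simp: Cs csOB ctOB H1hom)

lemma bB13: "(\<forall>f\<in>ar1 (Bmid A C M). inv1 (Bmid A C M) f \<in> hom (Bmid A C M) (t1 (Bmid A C M) f) (s1 (Bmid A C M) f))"
  unfolding Bmid_simps
  apply (intro ballI impI)
  subgoal for f using H1hom[of f] by (auto simp: Cs csOB ctOB)
  done

lemma bB14: "(\<forall>\<alpha>\<in>ar2 (Bmid A C M). inv2 (Bmid A C M) \<alpha> \<in> cell (Bmid A C M) (inv1 (Bmid A C M) (s2 (Bmid A C M) \<alpha>)) (inv1 (Bmid A C M) (t2 (Bmid A C M) \<alpha>)))"
  unfolding Bmid_simps
  by (auto elim!: AR2E simp: Cs csOB ctOB H1hom)

lemma bB15: "(\<forall>f\<in>ar1 (Bmid A C M). inv2 (Bmid A C M) (vi (Bmid A C M) f) = vi (Bmid A C M) (inv1 (Bmid A C M) f))"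
  unfolding Bmid_simps
  apply (intro ballI impI)
  subgoal for f using H1hom[of f] by (auto simp: Cs csOB ctOB)
  done

lemma bB16: "(\<forall>\<alpha>\<in>ar2 (Bmid A C M). \<forall>\<beta>\<in>ar2 (Bmid A C M). t2 (Bmid A C M) \<alpha> = s2 (Bmid A C M) \<beta> \<longrightarrow>
        inv2 (Bmid A C M) (vc (Bmid A C M) \<beta> \<alpha>) = vc (Bmid A C M) (inv2 (Bmid A C M) \<beta>) (inv2 (Bmid A C M) \<alpha>))"
  unfolding Bmid_simps
  by (auto elim!: AR2E simp: Cs csOB ctOB H1hom)

lemma bB17: "(\<forall>f\<in>ar1 (Bmid A C M). \<forall>g\<in>ar1 (Bmid A C M). \<forall>h\<in>ar1 (Bmid A C M). t1 (Bmid A C M) f = s1 (Bmid A C M) g \<longrightarrow> t1 (Bmid A C M) g = s1 (Bmid A C M) h \<longrightarrow>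
        assoc (Bmid A C M) h g f \<in> cell (Bmid A C M) (hc1 (Bmid A C M) (hc1 (Bmid A C M) h g) f) (hc1 (Bmid A C M) h (hc1 (Bmid A C M) g f)))"
  unfolding Bmid_simps
  apply (intro ballI impI)
  subgoal for f g h using H1hom[of f] H1hom[of g] H1hom[of h] by (auto simp: Cs csOB ctOB)
  done

lemma bB18: "(\<forall>\<alpha>\<in>ar2 (Bmid A C M). \<forall>\<beta>\<in>ar2 (Bmid A C M). \<forall>\<gamma>\<in>ar2 (Bmid A C M).
        t1 (Bmid A C M) (s2 (Bmid A C M) \<alpha>) = s1 (Bmid A C M) (s2 (Bmid A C M) \<beta>) \<longrightarrow> t1 (Bmid A C M) (s2 (Bmid A C M) \<beta>) = s1 (Bmid A C M) (s2 (Bmid A C M) \<gamma>) \<longrightarrow>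
        vc (Bmid A C M) (assoc (Bmid A C M) (t2 (Bmid A C M) \<gamma>) (t2 (Bmid A C M) \<beta>) (t2 (Bmid A C M) \<alpha>)) (hc2 (Bmid A C M) (hc2 (Bmid A C M) \<gamma> \<beta>) \<alpha>)
          = vc (Bmid A C M) (hc2 (Bmid A C M) \<gamma> (hc2 (Bmid A C M) \<beta> \<alpha>)) (assoc (Bmid A C M) (s2 (Bmid A C M) \<gamma>) (s2 (Bmid A C M) \<beta>) (s2 (Bmid A C M) \<alpha>)))"
  unfolding Bmid_simps
  by (auto elim!: AR2E simp: Cs csOB ctOB H1hom)

lemma bB19: "(\<forall>f\<in>ar1 (Bmid A C M). lunit (Bmid A C M) f \<in> cell (Bmid A C M) (hc1 (Bmid A C M) (idc (Bmid A C M) (t1 (Bmid A C M) f)) f) f)"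
  unfolding Bmid_simps
  apply (intro ballI impI)
  subgoal for f using H1hom[of f] by (auto simp: Cs csOB ctOB)
  done

lemma bB20: "(\<forall>\<alpha>\<in>ar2 (Bmid A C M). vc (Bmid A C M) \<alpha> (lunit (Bmid A C M) (s2 (Bmid A C M) \<alpha>))
        = vc (Bmid A C M) (lunit (Bmid A C M) (t2 (Bmid A C M) \<alpha>)) (hc2 (Bmid A C M) (vi (Bmid A C M) (idc (Bmid A C M) (t1 (Bmid A C M) (s2 (Bmid A C M) \<alpha>)))) \<alpha>))"
  unfolding Bmid_simps
  by (auto elim!: AR2E simp: Cs csOB ctOB H1hom)

lemma bB21: "(\<forall>f\<in>ar1 (Bmid A C M). runit (Bmid A C M) f \<in> cell (Bmid A C M) (hc1 (Bmid A C M) f (idc (Bmid A C M) (s1 (Bmid A C M) f))) f)"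
  unfolding Bmid_simps
  apply (intro ballI impI)
  subgoal for f using H1hom[of f] by (auto simp: Cs csOB ctOB)
  done

lemma bB22: "(\<forall>\<alpha>\<in>ar2 (Bmid A C M). vc (Bmid A C M) \<alpha> (runit (Bmid A C M) (s2 (Bmid A C M) \<alpha>))
        = vc (Bmid A C M) (runit (Bmid A C M) (t2 (Bmid A C M) \<alpha>)) (hc2 (Bmid A C M) \<alpha> (vi (Bmid A C M) (idc (Bmid A C M) (s1 (Bmid A C M) (s2 (Bmid A C M) \<alpha>))))))"
  unfolding Bmid_simps
  by (auto elim!: AR2E simp: Cs csOB ctOB H1hom)

lemma bB23: "(\<forall>f\<in>ar1 (Bmid A C M). evc (Bmid A C M) f \<in> cell (Bmid A C M) (hc1 (Bmid A C M) (inv1 (Bmid A C M) f) f) (idc (Bmid A C M) (s1 (Bmid A C M) f)))"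
  unfolding Bmid_simps
  apply (intro ballI impI)
  subgoal for f using H1hom[of f] by (auto simp: Cs csOB ctOB)
  done

lemma bB24: "(\<forall>\<alpha>\<in>ar2 (Bmid A C M). vc (Bmid A C M) (vi (Bmid A C M) (idc (Bmid A C M) (s1 (Bmid A C M) (s2 (Bmid A C M) \<alpha>)))) (evc (Bmid A C M) (s2 (Bmid A C M) \<alpha>))
        = vc (Bmid A C M) (evc (Bmid A C M) (t2 (Bmid A C M) \<alpha>)) (hc2 (Bmid A C M) (inv2 (Bmid A C M) \<alpha>) \<alpha>))"
  unfolding Bmid_simps
  by (auto elim!: AR2E simp: Cs csOB ctOB H1hom)

lemma bB25: "(\<forall>f\<in>ar1 (Bmid A C M). coevc (Bmid A C M) f \<in> cell (Bmid A C M) (idc (Bmid A C M) (t1 (Bmid A C M) f)) (hc1 (Bmid A C M) f (inv1 (Bmid A C M) f)))"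
  unfolding Bmid_simps
  apply (intro ballI impI)
  subgoal for f using H1hom[of f] by (auto simp: Cs csOB ctOB)
  done

lemma bB26: "(\<forall>\<alpha>\<in>ar2 (Bmid A C M). vc (Bmid A C M) (hc2 (Bmid A C M) \<alpha> (inv2 (Bmid A C M) \<alpha>)) (coevc (Bmid A C M) (s2 (Bmid A C M) \<alpha>))
        = vc (Bmid A C M) (coevc (Bmid A C M) (t2 (Bmid A C M) \<alpha>)) (vi (Bmid A C M) (idc (Bmid A C M) (t1 (Bmid A C M) (s2 (Bmid A C M) \<alpha>)))))"
  unfolding Bmid_simps
  by (auto elim!: AR2E simp: Cs csOB ctOB H1hom)

lemma bB27: "(\<forall>f\<in>ar1 (Bmid A C M). \<forall>g\<in>ar1 (Bmid A C M). \<forall>h\<in>ar1 (Bmid A C M). \<forall>k\<in>ar1 (Bmid A C M).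
        t1 (Bmid A C M) f = s1 (Bmid A C M) g \<longrightarrow> t1 (Bmid A C M) g = s1 (Bmid A C M) h \<longrightarrow> t1 (Bmid A C M) h = s1 (Bmid A C M) k \<longrightarrow>
        vc (Bmid A C M) (assoc (Bmid A C M) k h (hc1 (Bmid A C M) g f)) (assoc (Bmid A C M) (hc1 (Bmid A C M) k h) g f)
          = vc (Bmid A C M) (hc2 (Bmid A C M) (vi (Bmid A C M) k) (assoc (Bmid A C M) h g f))
              (vc (Bmid A C M) (assoc (Bmid A C M) k (hc1 (Bmid A C M) h g) f) (hc2 (Bmid A C M) (assoc (Bmid A C M) k h g) (vi (Bmid A C M) f))))"
  unfolding Bmid_simps
  apply (intro ballI impI)
  subgoal for f g h k using H1hom[of f] H1hom[of g] H1hom[of h] H1hom[of k] by (auto simp: Cs csOB ctOB)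
  done

lemma bB28: "(\<forall>f\<in>ar1 (Bmid A C M). \<forall>g\<in>ar1 (Bmid A C M). t1 (Bmid A C M) f = s1 (Bmid A C M) g \<longrightarrow>
        vc (Bmid A C M) (hc2 (Bmid A C M) (vi (Bmid A C M) g) (lunit (Bmid A C M) f)) (assoc (Bmid A C M) g (idc (Bmid A C M) (t1 (Bmid A C M) f)) f)
          = hc2 (Bmid A C M) (runit (Bmid A C M) g) (vi (Bmid A C M) f))"
  unfolding Bmid_simps
  apply (intro ballI impI)
  subgoal for f g using H1hom[of f] H1hom[of g] by (auto simp: Cs csOB ctOB)
  done

lemma bB29: "(\<forall>f\<in>ar1 (Bmid A C M).
        vc (Bmid A C M) (runit (Bmid A C M) f) (vc (Bmid A C M) (hc2 (Bmid A C M) (vi (Bmid A C M) f) (evc (Bmid A C M) f))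
          (vc (Bmid A C M) (assoc (Bmid A C M) f (inv1 (Bmid A C M) f) f) (hc2 (Bmid A C M) (coevc (Bmid A C M) f) (vi (Bmid A C M) f))))
          = lunit (Bmid A C M) f)"
  unfolding Bmid_simps
  apply (intro ballI impI)
  subgoal for f using H1hom[of f] by (auto simp: Cs csOB ctOB)
  done

lemma bgB: "bigroupoid (Bmid A C M)"
  by (rule bigroupoidI[OF bB1 bB2 bB3 bB4 bB5 bB6 bB7 bB8 bB9 bB10 bB11 bB12 bB13 bB14 bB15 bB16 bB17 bB18 bB19 bB20 bB21 bB22 bB23 bB24 bB25 bB26 bB27 bB28 bB29])
end

context fctx begin
lemma gG1: "(\<forall>X\<in>obj A. F0 (Gm A C M) X \<in> obj (Bmid A C M))"
  unfolding Bmid_simps Gm_simps using AX MX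
  by (auto simp: mem_hom mem_cell G1_AR1 OB_def)

lemma gG2: "(\<forall>f\<in>ar1 A. F1 (Gm A C M) f \<in> hom (Bmid A C M) (F0 (Gm A C M) (s1 A f)) (F0 (Gm A C M) (t1 A f)))"
  unfolding Bmid_simps Gm_simps using AX MX
  by (auto simp: mem_hom mem_cell G1_AR1 OB_def)

lemma gG3: "(\<forall>\<alpha>\<in>ar2 A. F2 (Gm A C M) \<alpha> \<in> cell (Bmid A C M) (F1 (Gm A C M) (s2 A \<alpha>)) (F1 (Gm A C M) (t2 A \<alpha>)))"
  unfolding Bmid_simps Gm_simps using AX MX
  by (auto simp: mem_hom mem_cell G1_AR1 OB_def)

lemma gG4: "(\<forall>f\<in>ar1 A. F2 (Gm A C M) (vi A f) = vi (Bmid A C M) (F1 (Gm A C M) f))"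
  unfolding Bmid_simps Gm_simps using AX MX
  by (auto simp: mem_hom mem_cell G1_AR1 OB_def)

lemma gG5: "(\<forall>\<alpha>\<in>ar2 A. \<forall>\<beta>\<in>ar2 A. t2 A \<alpha> = s2 A \<beta> \<longrightarrow>
        F2 (Gm A C M) (vc A \<beta> \<alpha>) = vc (Bmid A C M) (F2 (Gm A C M) \<beta>) (F2 (Gm A C M) \<alpha>))"
  unfolding Bmid_simps Gm_simps using AX MX
  by (auto simp: mem_hom mem_cell G1_AR1 OB_def)

lemma gG6: "(\<forall>f\<in>ar1 A. \<forall>g\<in>ar1 A. t1 A f = s1 A g \<longrightarrow>
        phc (Gm A C M) g f \<in> cell (Bmid A C M) (hc1 (Bmid A C M) (F1 (Gm A C M) g) (F1 (Gm A C M) f)) (F1 (Gm A C M) (hc1 A g f)))"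
  unfolding Bmid_simps Gm_simps using AX MX
  by (auto simp: mem_hom mem_cell G1_AR1 OB_def)

lemma gG7: "(\<forall>\<alpha>\<in>ar2 A. \<forall>\<beta>\<in>ar2 A. t1 A (s2 A \<alpha>) = s1 A (s2 A \<beta>) \<longrightarrow>
        vc (Bmid A C M) (F2 (Gm A C M) (hc2 A \<beta> \<alpha>)) (phc (Gm A C M) (s2 A \<beta>) (s2 A \<alpha>))
          = vc (Bmid A C M) (phc (Gm A C M) (t2 A \<beta>) (t2 A \<alpha>)) (hc2 (Bmid A C M) (F2 (Gm A C M) \<beta>) (F2 (Gm A C M) \<alpha>)))"
  unfolding Bmid_simps Gm_simps using AX MX
  by (auto simp: mem_hom mem_cell G1_AR1 OB_def)

lemma gG8: "(\<forall>X\<in>obj A. phu (Gm A C M) X \<in> cell (Bmid A C M) (idc (Bmid A C M) (F0 (Gm A C M) X)) (F1 (Gm A C M) (idc A X)))"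
  unfolding Bmid_simps Gm_simps using AX MX
  by (auto simp: mem_hom mem_cell G1_AR1 OB_def)

lemma gG9: "(\<forall>f\<in>ar1 A. phi (Gm A C M) f \<in> cell (Bmid A C M) (inv1 (Bmid A C M) (F1 (Gm A C M) f)) (F1 (Gm A C M) (inv1 A f)))"
  unfolding Bmid_simps Gm_simps using AX MX
  by (auto simp: mem_hom mem_cell G1_AR1 OB_def)

lemma gG10: "(\<forall>\<alpha>\<in>ar2 A. vc (Bmid A C M) (F2 (Gm A C M) (inv2 A \<alpha>)) (phi (Gm A C M) (s2 A \<alpha>))
        = vc (Bmid A C M) (phi (Gm A C M) (t2 A \<alpha>)) (inv2 (Bmid A C M) (F2 (Gm A C M) \<alpha>)))"
  unfolding Bmid_simps Gm_simps using AX MX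
  by (auto simp: mem_hom mem_cell G1_AR1 OB_def)

lemma gG11: "(\<forall>f\<in>ar1 A. \<forall>g\<in>ar1 A. \<forall>h\<in>ar1 A. t1 A f = s1 A g \<longrightarrow> t1 A g = s1 A h \<longrightarrow>
        vc (Bmid A C M) (F2 (Gm A C M) (assoc A h g f))
          (vc (Bmid A C M) (phc (Gm A C M) (hc1 A h g) f) (hc2 (Bmid A C M) (phc (Gm A C M) h g) (vi (Bmid A C M) (F1 (Gm A C M) f))))
        = vc (Bmid A C M) (phc (Gm A C M) h (hc1 A g f))
          (vc (Bmid A C M) (hc2 (Bmid A C M) (vi (Bmid A C M) (F1 (Gm A C M) h)) (phc (Gm A C M) g f)) (assoc (Bmid A C M) (F1 (Gm A C M) h) (F1 (Gm A C M) g) (F1 (Gm A C M) f))))"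
  unfolding Bmid_simps Gm_simps using AX MX
  by (auto simp: mem_hom mem_cell G1_AR1 OB_def)

lemma gG12: "(\<forall>f\<in>ar1 A.
        vc (Bmid A C M) (F2 (Gm A C M) (runit A f))
          (vc (Bmid A C M) (phc (Gm A C M) f (idc A (s1 A f))) (hc2 (Bmid A C M) (vi (Bmid A C M) (F1 (Gm A C M) f)) (phu (Gm A C M) (s1 A f))))
        = runit (Bmid A C M) (F1 (Gm A C M) f))"
  unfolding Bmid_simps Gm_simps using AX MX
  by (auto simp: mem_hom mem_cell G1_AR1 OB_def)

lemma gG13: "(\<forall>f\<in>ar1 A.
        vc (Bmid A C M) (F2 (Gm A C M) (lunit A f))
          (vc (Bmid A C M) (phc (Gm A C M) (idc A (t1 A f)) f) (hc2 (Bmid A C M) (phu (Gm A C M) (t1 A f)) (vi (Bmid A C M) (F1 (Gm A C M) f))))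
        = lunit (Bmid A C M) (F1 (Gm A C M) f))"
  unfolding Bmid_simps Gm_simps using AX MX
  by (auto simp: mem_hom mem_cell G1_AR1 OB_def)

lemma gG14: "(\<forall>f\<in>ar1 A.
        vc (Bmid A C M) (F2 (Gm A C M) (evc A f))
          (vc (Bmid A C M) (phc (Gm A C M) (inv1 A f) f) (hc2 (Bmid A C M) (phi (Gm A C M) f) (vi (Bmid A C M) (F1 (Gm A C M) f))))
        = vc (Bmid A C M) (phu (Gm A C M) (s1 A f)) (evc (Bmid A C M) (F1 (Gm A C M) f)))"
  unfolding Bmid_simps Gm_simps using AX MX
  by (auto simp: mem_hom mem_cell G1_AR1 OB_def)

lemma gG15: "(\<forall>f\<in>ar1 A.
        vc (Bmid A C M) (F2 (Gm A C M) (coevc A f)) (phu (Gm A C M) (t1 A f))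
        = vc (Bmid A C M) (phc (Gm A C M) f (inv1 A f))
            (vc (Bmid A C M) (hc2 (Bmid A C M) (vi (Bmid A C M) (F1 (Gm A C M) f)) (phi (Gm A C M) f)) (coevc (Bmid A C M) (F1 (Gm A C M) f))))"
  unfolding Bmid_simps Gm_simps using AX MX
  by (auto simp: mem_hom mem_cell G1_AR1 OB_def)

lemma gH1: "(\<forall>X\<in>obj (Bmid A C M). F0 (Hm C M) X \<in> obj C)"
  unfolding Bmid_simps Hm_simps
  by (auto elim!: AR2E simp: Cs OB_C H1hom csOB ctOB)

lemma gH2: "(\<forall>f\<in>ar1 (Bmid A C M). F1 (Hm C M) f \<in> hom C (F0 (Hm C M) (s1 (Bmid A C M) f)) (F0 (Hm C M) (t1 (Bmid A C M) f)))"
  unfolding Bmid_simps Hm_simps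
  by (auto elim!: AR2E simp: Cs OB_C H1hom csOB ctOB)

lemma gH3: "(\<forall>\<alpha>\<in>ar2 (Bmid A C M). F2 (Hm C M) \<alpha> \<in> cell C (F1 (Hm C M) (s2 (Bmid A C M) \<alpha>)) (F1 (Hm C M) (t2 (Bmid A C M) \<alpha>)))"
  unfolding Bmid_simps Hm_simps
  by (auto elim!: AR2E simp: Cs OB_C H1hom csOB ctOB)

lemma gH4: "(\<forall>f\<in>ar1 (Bmid A C M). F2 (Hm C M) (vi (Bmid A C M) f) = vi C (F1 (Hm C M) f))"
  unfolding Bmid_simps Hm_simps
  by (auto elim!: AR2E simp: Cs OB_C H1hom csOB ctOB)

lemma gH5: "(\<forall>\<alpha>\<in>ar2 (Bmid A C M). \<forall>\<beta>\<in>ar2 (Bmid A C M). t2 (Bmid A C M) \<alpha> = s2 (Bmid A C M) \<beta> \<longrightarrow>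
        F2 (Hm C M) (vc (Bmid A C M) \<beta> \<alpha>) = vc C (F2 (Hm C M) \<beta>) (F2 (Hm C M) \<alpha>))"
  unfolding Bmid_simps Hm_simps
  by (auto elim!: AR2E simp: Cs OB_C H1hom csOB ctOB)

lemma gH6: "(\<forall>f\<in>ar1 (Bmid A C M). \<forall>g\<in>ar1 (Bmid A C M). t1 (Bmid A C M) f = s1 (Bmid A C M) g \<longrightarrow>
        phc (Hm C M) g f \<in> cell C (hc1 C (F1 (Hm C M) g) (F1 (Hm C M) f)) (F1 (Hm C M) (hc1 (Bmid A C M) g f)))"
  unfolding Bmid_simps Hm_simps
  by (auto elim!: AR2E simp: Cc mem_cell mem_hom csOB ctOB)

lemma gH7: "(\<forall>\<alpha>\<in>ar2 (Bmid A C M). \<forall>\<beta>\<in>ar2 (Bmid A C M). t1 (Bmid A C M) (s2 (Bmid A C M) \<alpha>) = s1 (Bmid A C M) (s2 (Bmid A C M) \<beta>) \<longrightarrow>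
        vc C (F2 (Hm C M) (hc2 (Bmid A C M) \<beta> \<alpha>)) (phc (Hm C M) (s2 (Bmid A C M) \<beta>) (s2 (Bmid A C M) \<alpha>))
          = vc C (phc (Hm C M) (t2 (Bmid A C M) \<beta>) (t2 (Bmid A C M) \<alpha>)) (hc2 C (F2 (Hm C M) \<beta>) (F2 (Hm C M) \<alpha>)))"
  unfolding Bmid_simps Hm_simps
  by (auto elim!: AR2E simp: Cc mem_cell mem_hom csOB ctOB)

lemma gH8: "(\<forall>X\<in>obj (Bmid A C M). phu (Hm C M) X \<in> cell C (idc C (F0 (Hm C M) X)) (F1 (Hm C M) (idc (Bmid A C M) X)))"
  unfolding Bmid_simps Hm_simps
  by (auto elim!: AR2E simp: Cc mem_cell mem_hom csOB ctOB)

lemma gH9: "(\<forall>f\<in>ar1 (Bmid A C M). phi (Hm C M) f \<in> cell C (inv1 C (F1 (Hm C M) f)) (F1 (Hm C M) (inv1 (Bmid A C M) f)))"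
  unfolding Bmid_simps Hm_simps
  by (auto elim!: AR2E simp: Cc mem_cell mem_hom csOB ctOB)

lemma gH10: "(\<forall>\<alpha>\<in>ar2 (Bmid A C M). vc C (F2 (Hm C M) (inv2 (Bmid A C M) \<alpha>)) (phi (Hm C M) (s2 (Bmid A C M) \<alpha>))
        = vc C (phi (Hm C M) (t2 (Bmid A C M) \<alpha>)) (inv2 C (F2 (Hm C M) \<alpha>)))"
  unfolding Bmid_simps Hm_simps
  by (auto elim!: AR2E simp: Cc mem_cell mem_hom csOB ctOB)

lemma gH11: "(\<forall>f\<in>ar1 (Bmid A C M). \<forall>g\<in>ar1 (Bmid A C M). \<forall>h\<in>ar1 (Bmid A C M). t1 (Bmid A C M) f = s1 (Bmid A C M) g \<longrightarrow> t1 (Bmid A C M) g = s1 (Bmid A C M) h \<longrightarrow>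
        vc C (F2 (Hm C M) (assoc (Bmid A C M) h g f))
          (vc C (phc (Hm C M) (hc1 (Bmid A C M) h g) f) (hc2 C (phc (Hm C M) h g) (vi C (F1 (Hm C M) f))))
        = vc C (phc (Hm C M) h (hc1 (Bmid A C M) g f))
          (vc C (hc2 C (vi C (F1 (Hm C M) h)) (phc (Hm C M) g f)) (assoc C (F1 (Hm C M) h) (F1 (Hm C M) g) (F1 (Hm C M) f))))"
  unfolding Bmid_simps Hm_simps
  by (auto elim!: AR2E simp: Cc mem_cell mem_hom csOB ctOB)

lemma gH12: "(\<forall>f\<in>ar1 (Bmid A C M).
        vc C (F2 (Hm C M) (runit (Bmid A C M) f))
          (vc C (phc (Hm C M) f (idc (Bmid A C M) (s1 (Bmid A C M) f))) (hc2 C (vi C (F1 (Hm C M) f)) (phu (Hm C M) (s1 (Bmid A C M) f))))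
        = runit C (F1 (Hm C M) f))"
  unfolding Bmid_simps Hm_simps
  by (auto elim!: AR2E simp: Cc mem_cell mem_hom csOB ctOB)

lemma gH13: "(\<forall>f\<in>ar1 (Bmid A C M).
        vc C (F2 (Hm C M) (lunit (Bmid A C M) f))
          (vc C (phc (Hm C M) (idc (Bmid A C M) (t1 (Bmid A C M) f)) f) (hc2 C (phu (Hm C M) (t1 (Bmid A C M) f)) (vi C (F1 (Hm C M) f))))
        = lunit C (F1 (Hm C M) f))"
  unfolding Bmid_simps Hm_simps
  by (auto elim!: AR2E simp: Cc mem_cell mem_hom csOB ctOB)

lemma gH14: "(\<forall>f\<in>ar1 (Bmid A C M).
        vc C (F2 (Hm C M) (evc (Bmid A C M) f))
          (vc C (phc (Hm C M) (inv1 (Bmid A C M) f) f) (hc2 C (phi (Hm C M) f) (vi C (F1 (Hm C M) f))))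
        = vc C (phu (Hm C M) (s1 (Bmid A C M) f)) (evc C (F1 (Hm C M) f)))"
  unfolding Bmid_simps Hm_simps
  by (auto elim!: AR2E simp: Cc mem_cell mem_hom csOB ctOB)

lemma gH15: "(\<forall>f\<in>ar1 (Bmid A C M).
        vc C (F2 (Hm C M) (coevc (Bmid A C M) f)) (phu (Hm C M) (t1 (Bmid A C M) f))
        = vc C (phc (Hm C M) f (inv1 (Bmid A C M) f))
            (vc C (hc2 C (vi C (F1 (Hm C M) f)) (phi (Hm C M) f)) (coevc C (F1 (Hm C M) f))))"
  unfolding Bmid_simps Hm_simps
  by (auto elim!: AR2E simp: Cc mem_cell mem_hom csOB ctOB)

end

context fctx begin
lemma mG: "morphism A (Bmid A C M) (Gm A C M)" by (rule morphismI[OF gG1 gG2 gG3 gG4 gG5 gG6 gG7 gG8 gG9 gG10 gG11 gG12 gG13 gG14 gG15])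
lemma mH: "morphism (Bmid A C M) C (Hm C M)" by (rule morphismI[OF gH1 gH2 gH3 gH4 gH5 gH6 gH7 gH8 gH9 gH10 gH11 gH12 gH13 gH14 gH15])
lemma cof: "cofibration A (Bmid A C M) (Gm A C M)"
  unfolding cofibration_def by (auto simp: inj_on_def G1_def)
lemma strict: "strict_mor (Bmid A C M) C (Hm C M)"
  unfolding strict_mor_def by simp
lemma fib: "fibration (Bmid A C M) C (Hm C M)"
  unfolding fibration_def
proof (intro conjI ballI impI)
  fix X' b assume a: "X' \<in> obj (Bmid A C M)" "b \<in> ar1 C" "t1 C b = F0 (Hm C M) X'"
  let ?a = "CGen (Inr (s1 C b)) (Inr b) X'"
  have "?a \<in> AR1 A C M"
    using a by (intro AR1I) (auto simp: OB_def mem_hom Cc)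
  then show "\<exists>a\<in>ar1 (Bmid A C M). t1 (Bmid A C M) a = X' \<and> F0 (Hm C M) (s1 (Bmid A C M) a) = s1 C b \<and> F1 (Hm C M) a = b"
    by (intro bexI[of _ ?a]) auto
next
  fix a' \<beta> assume a: "a' \<in> ar1 (Bmid A C M)" "\<beta> \<in> ar2 C" "t2 C \<beta> = F1 (Hm C M) a'"
  let ?f = "CGen (cs a') (Inr (s2 C \<beta>)) (ct a')"
  have e1: "s1 C (s2 C \<beta>) = H0 M (cs a')"
    using a by (metis bgs_s1t2[OF bC] H1_s1 Bmid_simps(2) Hm_simps(2))
  have e2: "t1 C (s2 C \<beta>) = H0 M (ct a')"
    using a by (metis bgs_t1t2[OF bC] H1_t1 Bmid_simps(2) Hm_simps(2))
  have f: "?f \<in> AR1 A C M"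
    using a e1 e2 by (intro AR1I) (auto simp: mem_hom Cc csOB ctOB)
  have "(?f, Inr \<beta>, a') \<in> AR2 A C M"
    using a f by (auto simp: mem_cell)
  then show "\<exists>\<alpha>\<in>ar2 (Bmid A C M). t2 (Bmid A C M) \<alpha> = a' \<and> F1 (Hm C M) (s2 (Bmid A C M) \<alpha>) = s2 C \<beta> \<and> F2 (Hm C M) \<alpha> = \<beta>"
    by (intro bexI[of _ "(?f, Inr \<beta>, a')"]) auto
qed
lemma weq: "weak_equivalence (Bmid A C M) C (Hm C M)"
  unfolding weak_equivalence_def
proof (intro conjI ballI)
  fix Z assume z: "Z \<in> obj C"
  have "Inr Z \<in> OB A C" using z by (simp add: OB_def)
  moreover have "idc C Z \<in> hom C Z (H0 M (Inr Z))" using z by (simp add: bg_idc[OF bC])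
  ultimately show "\<exists>X'\<in>obj (Bmid A C M). hom C Z (F0 (Hm C M) X') \<noteq> {}"
    by (intro bexI[of _ "Inr Z"]) auto
next
  fix X Y assume xy: "X \<in> obj (Bmid A C M)" "Y \<in> obj (Bmid A C M)"
  show "hom_equivalence (Bmid A C M) C (Hm C M) X Y"
    unfolding hom_equivalence_def
    apply (rule exI[of _ "\<lambda>h. CGen X (Inr h) Y"])
    apply (rule exI[of _ "\<lambda>\<beta>. (CGen X (Inr (s2 C \<beta>)) Y, Inr \<beta>, CGen X (Inr (t2 C \<beta>)) Y)"])
    apply (rule exI[of _ "\<lambda>f. (f, Inr (vi C (H1 M f)), CGen X (Inr (H1 M f)) Y)"])
    apply (rule exI[of _ "\<lambda>h. vi C h"])
    using xy by (auto elim!: AR2E simp: AR1I Cc mem_cell mem_hom csOB ctOB)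
qed
lemma meq: "mor_eq A M (mcomp C (Hm C M) (Gm A C M))"
  unfolding mor_eq_def mcomp_def using MX(6) MX(8) MX(9)
  by (auto simp: Cc mem_cell mem_hom)
end

theorem lemma4p4:
  fixes A :: "('ao,'am,'at) bigrpd"
    and C :: "('co,'cm,'ct) bigrpd"
    and M :: "('ao,'am,'at,'co,'cm,'ct) bmor"
  assumes "bigroupoid A" and "bigroupoid C" and "morphism A C M"
  shows "\<exists>(B :: ('ao,'am,'at,'co,'cm,'ct) mid_bigrpd) G H.
           bigroupoid B \<and> morphism A B G \<and> morphism B C H \<and>
           cofibration A B G \<and> strict_mor B C H \<and> trivial_fibration B C H \<and>
           mor_eq A M (mcomp C H G)"
proof -
  interpret fctx A C M using assms by unfold_locales
  show ?thesis
    using bgB mG mH cof strict fib weq meq unfolding trivial_fibration_def by blast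
qed

end
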